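(* There exists a constant $C'>0$ depending only on $\eta$ and $t$ such that, provided $c_I,c_A$ are sufficiently small depending only on $\eta$, the test $\psi=\psi_{\mathrm{bulk}}\vee\psi_1\vee\psi_2$ satisfies: (i) $\mathbb P_p(\psi=1)\le\eta/2$; (ii) for every $q\in[0,1]^N$ with $$\|p-q\|_t\ge C'\left(\sqrt{\frac{\|p_{\le I}\|_r}{n}}+\frac{\|p_{>I}\|_1^{\frac{2-t}{t}}}{n^{\frac{2t-2}{t}}}+\frac1n\right),$$ $\mathbb P_q(\psi=0)\le\eta/2$. Consequently $\rho^*\lesssim_{\eta,t}\sqrt{\|p_{\le I}\|_r/n}+\|p_{>I}\|_1^{(2-t)/t}/n^{(2t-2)/t}+1/n$.
   Context: Binomial model: $N\ge2$, $n\ge2$ even, $k=n/2$. For $q\in[0,1]^N$ one observes $X_1,\dots,X_n$ i.i.d. in $\{0,1\}^N$ with mutually independent coordinates $X_l(j)\sim\mathrm{Ber}(q_j)$; $\mathbb P_q$ is their joint law. Known $p\in[0,1]^N$ with $p_1\ge\dots\ge p_N$ and $\max_jp_j\le1/2$; $\eta\in(0,1)$; $t\in[1,2]$, $r=\frac{2t}{4-t}$, $b=\frac{4-2t}{4-t}$; $\|x\|_s=(\sum_j|x_j|^s)^{1/s}$; $x_{\le u}=(x_1,\dots,x_u,0,\dots,0)$, $x_{>u}=(0,\dots,0,x_{u+1},\dots,x_N)$. $I=\min\{J\in\{0,\dots,N\}:\sum_{i>J}p_i^2\le c_I/n^2\}$; $A=\max\{a\in\{1,\dots,I\}:p_a^{b/2}\ge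 c_A/(\sqrt n(\sum_{i\le I}p_i^r)^{1/4})\}$ with $\max\emptyset=-\infty$, $x_{\le-\infty}=0$, $x_{>-\infty}=x$; $c_I,c_A>0$ small constants depending only on $\eta$. $\bar c=4/\sqrt\eta$. $S=\sum_{l=1}^kX_l$, $S'=\sum_{l=k+1}^nX_l$, $N_j=\sum_{l=1}^nX_l(j)$. $T_{\mathrm{bulk}}=\sum_{i\le A}p_i^{-b}(S_i/k-p_i)(S'_i/k-p_i)$, $\psi_{\mathrm{bulk}}=\mathbf 1\{T_{\mathrm{bulk}}>\frac{\bar c}{n}(\sum_{i\le A}p_i^r)^{1/2}\}$; $T_1=\sum_{i>A}(N_i/n-p_i)$, $\psi_1=\mathbf 1\{|T_1|>\bar c\sqrt{\sum_{i>A}p_i/n}\}$; $\psi_2=\mathbf 1\{\exists j>A:N_j\ge2\}$. $\rho^*=\inf\{\rho>0:\inf_\psi[\mathbb P_p(\psi=1)+\sup_{q\in[0,1]^N:\|p-q\|_t\ge\rho}\mathbb P_q(\psi=0)]\le\eta\}$. *)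

theory Defs
  imports "HOL-Analysis.Analysis"
begin

text \<open>Real power with the convention x^0 = 1 (also for x = 0).\<close>
definition pw :: "real \<Rightarrow> real \<Rightarrow> real" where
  "pw x a = (if a = 0 then 1 else x powr a)"

definition lnorm_on :: "real \<Rightarrow> (nat \<Rightarrow> real) \<Rightarrow> nat set \<Rightarrow> real" where
  "lnorm_on s v S = (\<Sum>j\<in>S. \<bar>v j\<bar> powr s) powr (1 / s)"

definition r_of :: "real \<Rightarrow> real" where "r_of t = 2 * t / (4 - t)"
definition b_of :: "real \<Rightarrow> real" where "b_of t = (4 - 2 * t) / (4 - t)"

definition Ival :: "real \<Rightarrow> nat \<Rightarrow> nat \<Rightarrow> (nat \<Rightarrow> real) \<Rightarrow> nat" where
  "Ival cI n N p = (LEAST J. J \<le> N \<and> (\<Sum>i\<in>{J<..N}. (p i)\<^sup>2) \<le> cI / (real n)\<^sup>2)"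

text \<open>The index A; the value 0 encodes A = -infinity (then x_{<=A} = 0, x_{>A} = x).\<close>
definition Aval :: "real \<Rightarrow> real \<Rightarrow> nat \<Rightarrow> nat \<Rightarrow> (nat \<Rightarrow> real) \<Rightarrow> real \<Rightarrow> nat" where
  "Aval cI cA n N p t =
     (let I = Ival cI n N p;
          cond = (\<lambda>a. pw (p a) (b_of t / 2) \<ge>
                   cA / (sqrt (real n) * (\<Sum>i\<in>{1..I}. pw (p i) (r_of t)) powr (1/4)))
      in if (\<exists>a\<in>{1..I}. cond a) then Max {a\<in>{1..I}. cond a} else 0)"

text \<open>Observations: x l j = X_l(j) for l in {1..n}, j in {1..N}.\<close>
definition config_space :: "nat \<Rightarrow> nat \<Rightarrow> (nat \<Rightarrow> nat \<Rightarrow> bool) set" where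
  "config_space n N = PiE {1..n} (\<lambda>_. PiE {1..N} (\<lambda>_. (UNIV :: bool set)))"

definition weight :: "nat \<Rightarrow> nat \<Rightarrow> (nat \<Rightarrow> real) \<Rightarrow> (nat \<Rightarrow> nat \<Rightarrow> bool) \<Rightarrow> real" where
  "weight n N q x = (\<Prod>l\<in>{1..n}. \<Prod>j\<in>{1..N}. (if x l j then q j else 1 - q j))"

definition Prob :: "nat \<Rightarrow> nat \<Rightarrow> (nat \<Rightarrow> real) \<Rightarrow> ((nat \<Rightarrow> nat \<Rightarrow> bool) \<Rightarrow> bool) \<Rightarrow> real" where
  "Prob n N q E = (\<Sum>x\<in>{x \<in> config_space n N. E x}. weight n N q x)"

definition cnt :: "(nat \<Rightarrow> nat \<Rightarrow> bool) \<Rightarrow> nat set \<Rightarrow> nat \<Rightarrow> nat" where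
  "cnt x L j = card {l\<in>L. x l j}"

definition cbar :: "real \<Rightarrow> real" where "cbar eta = 4 / sqrt eta"

definition T_bulk :: "real \<Rightarrow> real \<Rightarrow> nat \<Rightarrow> nat \<Rightarrow> (nat \<Rightarrow> real) \<Rightarrow> real \<Rightarrow> (nat \<Rightarrow> nat \<Rightarrow> bool) \<Rightarrow> real" where
  "T_bulk cI cA n N p t x =
     (let A = Aval cI cA n N p t; k = n div 2 in
      \<Sum>i\<in>{1..A}. pw (p i) (- b_of t)
        * (real (cnt x {1..k} i) / real k - p i)
        * (real (cnt x {k+1..n} i) / real k - p i))"

definition psi_bulk :: "real \<Rightarrow> real \<Rightarrow> real \<Rightarrow> nat \<Rightarrow> nat \<Rightarrow> (nat \<Rightarrow> real) \<Rightarrow> real \<Rightarrow> (nat \<Rightarrow> nat \<Rightarrow> bool) \<Rightarrow> bool" where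
  "psi_bulk eta cI cA n N p t x =
     (T_bulk cI cA n N p t x >
        cbar eta / real n * sqrt (\<Sum>i\<in>{1..Aval cI cA n N p t}. pw (p i) (r_of t)))"

definition T1 :: "real \<Rightarrow> real \<Rightarrow> nat \<Rightarrow> nat \<Rightarrow> (nat \<Rightarrow> real) \<Rightarrow> real \<Rightarrow> (nat \<Rightarrow> nat \<Rightarrow> bool) \<Rightarrow> real" where
  "T1 cI cA n N p t x =
     (\<Sum>i\<in>{Aval cI cA n N p t<..N}. real (cnt x {1..n} i) / real n - p i)"

definition psi1 :: "real \<Rightarrow> real \<Rightarrow> real \<Rightarrow> nat \<Rightarrow> nat \<Rightarrow> (nat \<Rightarrow> real) \<Rightarrow> real \<Rightarrow> (nat \<Rightarrow> nat \<Rightarrow> bool) \<Rightarrow> bool" where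
  "psi1 eta cI cA n N p t x =
     (\<bar>T1 cI cA n N p t x\<bar> >
        cbar eta * sqrt ((\<Sum>i\<in>{Aval cI cA n N p t<..N}. p i) / real n))"

definition psi2 :: "real \<Rightarrow> real \<Rightarrow> nat \<Rightarrow> nat \<Rightarrow> (nat \<Rightarrow> real) \<Rightarrow> real \<Rightarrow> (nat \<Rightarrow> nat \<Rightarrow> bool) \<Rightarrow> bool" where
  "psi2 cI cA n N p t x = (\<exists>j\<in>{Aval cI cA n N p t<..N}. cnt x {1..n} j \<ge> 2)"

definition test :: "real \<Rightarrow> real \<Rightarrow> real \<Rightarrow> nat \<Rightarrow> nat \<Rightarrow> (nat \<Rightarrow> real) \<Rightarrow> real \<Rightarrow> (nat \<Rightarrow> nat \<Rightarrow> bool) \<Rightarrow> bool" where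
  "test eta cI cA n N p t x =
     (psi_bulk eta cI cA n N p t x \<or> psi1 eta cI cA n N p t x \<or> psi2 cI cA n N p t x)"

definition in_cube :: "nat \<Rightarrow> (nat \<Rightarrow> real) \<Rightarrow> bool" where
  "in_cube N q = (\<forall>j\<in>{1..N}. 0 \<le> q j \<and> q j \<le> 1)"

text \<open>Minimax separation rate; tests are arbitrary functions of the data.
  The condition "P_p(psi=1) + sup_q P_q(psi=0) <= eta" is written with the sup unfolded
  as a universal bound.\<close>
definition rho_star :: "nat \<Rightarrow> nat \<Rightarrow> (nat \<Rightarrow> real) \<Rightarrow> real \<Rightarrow> real \<Rightarrow> real" where
  "rho_star n N p t eta = Inf {\<rho>. \<rho> > 0 \<and>
     (\<exists>\<psi>. \<forall>q. in_cube N q \<and> lnorm_on t (\<lambda>j. p j - q j) {1..N} \<ge> \<rho> \<longrightarrow>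
        Prob n N p \<psi> + Prob n N q (\<lambda>x. \<not> \<psi> x) \<le> eta)}"

definition rate :: "real \<Rightarrow> nat \<Rightarrow> nat \<Rightarrow> (nat \<Rightarrow> real) \<Rightarrow> real \<Rightarrow> real" where
  "rate cI n N p t =
     (let I = Ival cI n N p in
       sqrt (lnorm_on (r_of t) p {1..I} / real n)
       + pw (\<Sum>i\<in>{I<..N}. p i) ((2 - t) / t) / real n powr ((2 * t - 2) / t)
       + 1 / real n)"

end

theory Submission
  imports Defs
begin

definition Ex :: "nat \<Rightarrow> nat \<Rightarrow> (nat \<Rightarrow> real) \<Rightarrow> ((nat \<Rightarrow> nat \<Rightarrow> bool) \<Rightarrow> real) \<Rightarrow> real" where
  "Ex n N q f = (\<Sum>x\<in>config_space n N. weight n N q x * f x)"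

lemma finite_config: "finite (config_space n N)"
  unfolding config_space_def by (intro finite_PiE) auto

lemma sum_bool_UNIV: "(\<Sum>b\<in>(UNIV::bool set). f b) = f True + f False"
  by (simp add: UNIV_bool add.commute)

lemma master:
  "Ex n N q (\<lambda>x. \<Prod>l\<in>{1..n}. \<Prod>j\<in>{1..N}. h l j (x l j)) =
   (\<Prod>l\<in>{1..n}. \<Prod>j\<in>{1..N}. (q j * h l j True + (1 - q j) * h l j False))"
proof -
  define g where "g l j b = (if b then q j else 1 - q j) * h l j b" for l j b
  have "Ex n N q (\<lambda>x. \<Prod>l\<in>{1..n}. \<Prod>j\<in>{1..N}. h l j (x l j)) =
        (\<Sum>x\<in>config_space n N. \<Prod>l\<in>{1..n}. \<Prod>j\<in>{1..N}. g l j (x l j))"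
    unfolding Ex_def weight_def g_def by (simp add: prod.distrib)
  also have "\<dots> = (\<Prod>l\<in>{1..n}. \<Sum>y\<in>PiE {1..N} (\<lambda>_. (UNIV::bool set)). \<Prod>j\<in>{1..N}. g l j (y j))"
    unfolding config_space_def
    by (rule prod_sum_PiE[symmetric, where f="\<lambda>l y. \<Prod>j\<in>{1..N}. g l j (y j)"]) (auto intro: finite_PiE)
  also have "\<dots> = (\<Prod>l\<in>{1..n}. \<Prod>j\<in>{1..N}. \<Sum>b\<in>(UNIV::bool set). g l j b)"
    by (intro prod.cong refl, rule prod_sum_PiE[symmetric]) auto
  also have "\<dots> = (\<Prod>l\<in>{1..n}. \<Prod>j\<in>{1..N}. (q j * h l j True + (1 - q j) * h l j False))"
    by (simp add: sum_bool_UNIV g_def)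
  finally show ?thesis .
qed

definition cells :: "nat \<Rightarrow> nat \<Rightarrow> (nat \<times> nat) set" where
  "cells n N = {1..n} \<times> {1..N}"

definition rB :: "(nat \<times> nat) set \<Rightarrow> (nat \<Rightarrow> nat \<Rightarrow> bool) \<Rightarrow> (nat \<times> nat \<Rightarrow> bool)" where
  "rB B x = restrict (\<lambda>c. x (fst c) (snd c)) B"

definition piB :: "(nat \<Rightarrow> real) \<Rightarrow> (nat \<times> nat) set \<Rightarrow> (nat \<times> nat \<Rightarrow> bool) \<Rightarrow> real" where
  "piB q B u = (\<Prod>c\<in>B. if u c then q (snd c) else 1 - q (snd c))"

definition ind :: "(nat \<times> nat) set \<Rightarrow> (nat \<times> nat \<Rightarrow> bool) \<Rightarrow> (nat \<Rightarrow> nat \<Rightarrow> bool) \<Rightarrow> real" where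
  "ind B u x = (\<Prod>c\<in>B. of_bool (x (fst c) (snd c) = u c))"

lemma finite_cells: "finite (cells n N)" unfolding cells_def by auto

lemma prod_two_sets:
  fixes a b :: "'a \<Rightarrow> real"
  assumes "finite C" "B \<subseteq> C" "B' \<subseteq> C" "B \<inter> B' = {}"
  shows "(\<Prod>c\<in>C. if c \<in> B then a c else if c \<in> B' then b c else 1) = prod a B * prod b B'"
proof -
  have "(\<Prod>c\<in>C. if c \<in> B then a c else if c \<in> B' then b c else 1) =
        (\<Prod>c\<in>C. (if c \<in> B then a c else 1) * (if c \<in> B' then b c else 1))"
    using assms(4) by (intro prod.cong) auto
  also have "\<dots> = prod a (C \<inter> B) * prod b (C \<inter> B')"
    by (simp add: prod.distrib prod.inter_restrict[OF assms(1)])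
  also have "\<dots> = prod a B * prod b B'" using assms(2,3) by (simp add: Int_absorb1)
  finally show ?thesis .
qed

lemma E_ind2:
  assumes "B \<subseteq> cells n N" "B' \<subseteq> cells n N" "B \<inter> B' = {}"
  shows "Ex n N q (\<lambda>x. ind B u x * ind B' v x) = piB q B u * piB q B' v"
proof -
  define h where "h l j b = (if (l,j) \<in> B then of_bool (b = u (l,j)) else
      if (l,j) \<in> B' then of_bool (b = v (l,j)) else (1::real))" for l j b
  have fin: "finite (cells n N)" by (rule finite_cells)
  have 1: "(\<Prod>l\<in>{1..n}. \<Prod>j\<in>{1..N}. h l j (x l j)) = ind B u x * ind B' v x" for x
  proof -
    have "(\<Prod>l\<in>{1..n}. \<Prod>j\<in>{1..N}. h l j (x l j)) = (\<Prod>c\<in>cells n N. h (fst c) (snd c) (x (fst c) (snd c)))"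
      unfolding cells_def prod.cartesian_product by (simp add: case_prod_beta)
    also have "\<dots> = (\<Prod>c\<in>cells n N. if c \<in> B then of_bool (x (fst c) (snd c) = u c) else
         if c \<in> B' then of_bool (x (fst c) (snd c) = v c) else 1)"
      unfolding h_def by (intro prod.cong) auto
    also have "\<dots> = ind B u x * ind B' v x"
      unfolding ind_def by (rule prod_two_sets[OF fin assms])
    finally show ?thesis .
  qed
  have 2: "(\<Prod>l\<in>{1..n}. \<Prod>j\<in>{1..N}. (q j * h l j True + (1 - q j) * h l j False)) = piB q B u * piB q B' v"
  proof -
    have "(\<Prod>l\<in>{1..n}. \<Prod>j\<in>{1..N}. (q j * h l j True + (1 - q j) * h l j False)) =
      (\<Prod>c\<in>cells n N. q (snd c) * h (fst c) (snd c) True + (1 - q (snd c)) * h (fst c) (snd c) False)"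
      unfolding cells_def prod.cartesian_product by (simp add: case_prod_beta)
    also have "\<dots> = (\<Prod>c\<in>cells n N. if c \<in> B then (if u c then q (snd c) else 1 - q (snd c)) else
         if c \<in> B' then (if v c then q (snd c) else 1 - q (snd c)) else 1)"
      unfolding h_def by (intro prod.cong) auto
    also have "\<dots> = piB q B u * piB q B' v"
      unfolding piB_def by (rule prod_two_sets[OF fin assms])
    finally show ?thesis .
  qed
  show ?thesis using master[of n N q h] 1 2 by simp
qed

lemma Ex_sum: "Ex n N q (\<lambda>x. \<Sum>i\<in>S. f i x) = (\<Sum>i\<in>S. Ex n N q (f i))"
  unfolding Ex_def by (simp add: sum_distrib_left sum.swap[of _ S])

lemma Ex_add: "Ex n N q (\<lambda>x. f x + g x) = Ex n N q f + Ex n N q g"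
  unfolding Ex_def by (simp add: distrib_left sum.distrib)

lemma Ex_diff: "Ex n N q (\<lambda>x. f x - g x) = Ex n N q f - Ex n N q g"
  unfolding Ex_def by (simp add: right_diff_distrib sum_subtractf)

lemma Ex_cmult: "Ex n N q (\<lambda>x. c * f x) = c * Ex n N q f"
  unfolding Ex_def by (simp add: sum_distrib_left mult.left_commute)

lemma Ex_multc: "Ex n N q (\<lambda>x. f x * c) = Ex n N q f * c"
  unfolding Ex_def by (simp add: sum_distrib_right mult.assoc)

lemma Ex_cong: "(\<And>x. x \<in> config_space n N \<Longrightarrow> f x = g x) \<Longrightarrow> Ex n N q f = Ex n N q g"
  unfolding Ex_def by (intro sum.cong) auto

lemma ind_expand:
  assumes "finite B"
  shows "F (rB B x) = (\<Sum>u\<in>PiE B (\<lambda>_. UNIV). F u * ind B u x)"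
proof -
  have ind01: "ind B u x = (if u = rB B x then 1 else 0)" if "u \<in> PiE B (\<lambda>_. UNIV)" for u
  proof (cases "u = rB B x")
    case True then show ?thesis unfolding ind_def rB_def by simp
  next
    case False
    have "\<exists>c\<in>B. u c \<noteq> x (fst c) (snd c)"
    proof (rule ccontr)
      assume "\<not> ?thesis"
      then have "u = rB B x" using that unfolding rB_def
        by (intro ext) (auto simp: PiE_def extensional_def)
      then show False using False by simp
    qed
    then obtain c where c: "c \<in> B" "u c \<noteq> x (fst c) (snd c)" by blast
    then have "ind B u x = 0" unfolding ind_def using assms
      by (intro prod_zero) auto
    then show ?thesis using False by simp
  qed
  have "rB B x \<in> PiE B (\<lambda>_. UNIV)" unfolding rB_def by simp
  have "(\<Sum>u\<in>PiE B (\<lambda>_. UNIV). F u * ind B u x) = (\<Sum>u\<in>PiE B (\<lambda>_. UNIV). if u = rB B x then F u else 0)"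
    by (rule sum.cong) (auto simp: ind01)
  also have "\<dots> = F (rB B x)" using \<open>rB B x \<in> PiE B (\<lambda>_. UNIV)\<close> by (simp add: sum.delta' finite_PiE assms)
  finally have "(\<Sum>u\<in>PiE B (\<lambda>_. UNIV). F u * ind B u x) = F (rB B x)" .
  then show ?thesis by simp
qed

lemma Ex_one_ind: "B \<subseteq> cells n N \<Longrightarrow> Ex n N q (ind B u) = piB q B u"
  using E_ind2[of B n N "{}" q u "\<lambda>_. True"] by (simp add: ind_def[abs_def] piB_def)

lemma Ex_rB:
  assumes "B \<subseteq> cells n N"
  shows "Ex n N q (\<lambda>x. F (rB B x)) = (\<Sum>u\<in>PiE B (\<lambda>_. UNIV). F u * piB q B u)"
proof -
  have fin: "finite B" using assms finite_cells finite_subset by blast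
  have "Ex n N q (\<lambda>x. F (rB B x)) = Ex n N q (\<lambda>x. \<Sum>u\<in>PiE B (\<lambda>_. UNIV). F u * ind B u x)"
    by (rule Ex_cong) (rule ind_expand[OF fin])
  also have "\<dots> = (\<Sum>u\<in>PiE B (\<lambda>_. UNIV). F u * piB q B u)"
    by (simp add: Ex_sum Ex_cmult Ex_one_ind[OF assms])
  finally show ?thesis .
qed

lemma indep:
  assumes "B \<subseteq> cells n N" "B' \<subseteq> cells n N" "B \<inter> B' = {}"
    and f: "\<And>x. f x = F (rB B x)" and g: "\<And>x. g x = G (rB B' x)"
  shows "Ex n N q (\<lambda>x. f x * g x) = Ex n N q f * Ex n N q g"
proof -
  have fin: "finite B" "finite B'" using assms finite_cells finite_subset by blast+
  have "Ex n N q (\<lambda>x. f x * g x) = Ex n N q (\<lambda>x. (\<Sum>u\<in>PiE B (\<lambda>_. UNIV). F u * ind B u x) *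
      (\<Sum>v\<in>PiE B' (\<lambda>_. UNIV). G v * ind B' v x))"
    unfolding f g by (rule Ex_cong, rule arg_cong2[where f="(*)"]; rule ind_expand; rule fin)
  also have "\<dots> = Ex n N q (\<lambda>x. \<Sum>u\<in>PiE B (\<lambda>_. UNIV). \<Sum>v\<in>PiE B' (\<lambda>_. UNIV). (F u * G v) * (ind B u x * ind B' v x))"
    by (simp add: sum_product mult_ac)
  also have "\<dots> = (\<Sum>u\<in>PiE B (\<lambda>_. UNIV). \<Sum>v\<in>PiE B' (\<lambda>_. UNIV). (F u * G v) * (piB q B u * piB q B' v))"
    by (simp add: Ex_sum Ex_cmult E_ind2[OF assms(1-3)])
  also have "\<dots> = (\<Sum>u\<in>PiE B (\<lambda>_. UNIV). F u * piB q B u) * (\<Sum>v\<in>PiE B' (\<lambda>_. UNIV). G v * piB q B' v)"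
    by (simp add: sum_product mult_ac)
  also have "\<dots> = Ex n N q f * Ex n N q g"
    unfolding f g by (simp add: Ex_rB[OF assms(1)] Ex_rB[OF assms(2)])
  finally show ?thesis .
qed


lemma Ex_const: "Ex n N q (\<lambda>_. c) = c"
proof -
  have "Ex n N q (\<lambda>x. \<Prod>l\<in>{1..n}. \<Prod>j\<in>{1..N}. (\<lambda>l j b. 1::real) l j (x l j)) = 1"
    by (subst master) simp
  then have "Ex n N q (\<lambda>_. 1) = 1" by simp
  then show ?thesis using Ex_cmult[of n N q c "\<lambda>_. 1"] by simp
qed

lemma Ex_Y:
  assumes "l \<in> {1..n}" "j \<in> {1..N}"
  shows "Ex n N q (\<lambda>x. of_bool (x l j)) = q j"
proof -
  have "Ex n N q (ind {(l,j)} (\<lambda>_. True)) = piB q {(l,j)} (\<lambda>_. True)"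
    by (rule Ex_one_ind) (use assms in \<open>auto simp: cells_def\<close>)
  then show ?thesis by (simp add: ind_def[abs_def] piB_def)
qed

lemma Ex_YY:
  assumes "l \<in> {1..n}" "j \<in> {1..N}" "l' \<in> {1..n}" "j' \<in> {1..N}" "(l,j) \<noteq> (l',j')"
  shows "Ex n N q (\<lambda>x. of_bool (x l j) * of_bool (x l' j')) = q j * q j'"
proof -
  have "Ex n N q (ind {(l,j),(l',j')} (\<lambda>_. True)) = piB q {(l,j),(l',j')} (\<lambda>_. True)"
    by (rule Ex_one_ind) (use assms in \<open>auto simp: cells_def\<close>)
  then show ?thesis using assms(5) by (simp add: ind_def[abs_def] piB_def)
qed

lemma of_bool_sq [simp]: "(of_bool b :: real) * of_bool b = of_bool b" by simp

lemma cnt_sum: "finite H \<Longrightarrow> real (cnt x H i) = (\<Sum>l\<in>H. of_bool (x l i))"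
  unfolding cnt_def by (simp add: sum.If_cases[of H] Int_def)

lemma Ex_cnt:
  assumes "H \<subseteq> {1..n}" "i \<in> {1..N}"
  shows "Ex n N q (\<lambda>x. real (cnt x H i)) = real (card H) * q i"
proof -
  have fin: "finite H" using assms finite_subset by blast
  have "Ex n N q (\<lambda>x. real (cnt x H i)) = (\<Sum>l\<in>H. Ex n N q (\<lambda>x. of_bool (x l i)))"
    by (simp add: cnt_sum[OF fin] Ex_sum)
  also have "\<dots> = (\<Sum>l\<in>H. q i)" using assms by (intro sum.cong refl Ex_Y) auto
  finally show ?thesis by simp
qed

lemma Ex_cnt2:
  assumes "H \<subseteq> {1..n}" "i \<in> {1..N}"
  shows "Ex n N q (\<lambda>x. (real (cnt x H i))\<^sup>2) = real (card H) * q i + real (card H) * (real (card H) - 1) * (q i)\<^sup>2"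
proof -
  have fin: "finite H" using assms finite_subset by blast
  have "Ex n N q (\<lambda>x. (real (cnt x H i))\<^sup>2) =
        (\<Sum>l\<in>H. \<Sum>l'\<in>H. Ex n N q (\<lambda>x. of_bool (x l i) * of_bool (x l' i)))"
    by (simp add: cnt_sum[OF fin] Ex_sum power2_eq_square sum_product)
  also have "\<dots> = (\<Sum>l\<in>H. q i + (\<Sum>l'\<in>H - {l}. (q i)\<^sup>2))"
  proof (intro sum.cong refl)
    fix l assume l: "l \<in> H"
    have "(\<Sum>l'\<in>H. Ex n N q (\<lambda>x. of_bool (x l i) * of_bool (x l' i))) =
       Ex n N q (\<lambda>x. of_bool (x l i) * of_bool (x l i)) + (\<Sum>l'\<in>H - {l}. Ex n N q (\<lambda>x. of_bool (x l i) * of_bool (x l' i)))"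
      using l fin by (simp add: sum.remove)
    also have "Ex n N q (\<lambda>x. of_bool (x l i) * of_bool (x l i)) = q i"
      using Ex_Y[of l n i N q] l assms by (auto simp del: of_bool_sq simp: of_bool_sq)
    also have "(\<Sum>l'\<in>H - {l}. Ex n N q (\<lambda>x. of_bool (x l i) * of_bool (x l' i))) = (\<Sum>l'\<in>H - {l}. (q i)\<^sup>2)"
      using l assms by (intro sum.cong refl) (subst Ex_YY, auto simp: power2_eq_square)
    finally show "(\<Sum>l'\<in>H. Ex n N q (\<lambda>x. of_bool (x l i) * of_bool (x l' i))) = q i + (\<Sum>l'\<in>H - {l}. (q i)\<^sup>2)" .
  qed
  also have "\<dots> = real (card H) * q i + real (card H) * (real (card H) - 1) * (q i)\<^sup>2"
  proof (cases "card H = 0")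
    case False
    then have "real (card H - Suc 0) = real (card H) - 1" by (simp add: of_nat_diff)
    then show ?thesis using fin by (simp add: sum.distrib card_Diff_singleton_if algebra_simps)
  qed (use fin in simp)
  finally show ?thesis .
qed


definition Uv :: "nat set \<Rightarrow> real \<Rightarrow> nat \<Rightarrow> (nat \<Rightarrow> nat \<Rightarrow> bool) \<Rightarrow> real" where
  "Uv H c i x = real (cnt x H i) / real (card H) - c"

lemma cnt_rB: "H \<times> {i} \<subseteq> B \<Longrightarrow> cnt x H i = card {l\<in>H. rB B x (l,i)}"
  unfolding cnt_def rB_def by (intro arg_cong[where f=card]) auto

lemma Uv_rB: "H \<times> {i} \<subseteq> B \<Longrightarrow> Uv H c i x = (\<lambda>u. real (card {l\<in>H. u (l,i)}) / real (card H) - c) (rB B x)"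
  unfolding Uv_def by (simp add: cnt_rB)

lemma Ex_U:
  assumes "H \<subseteq> {1..n}" "H \<noteq> {}" "i \<in> {1..N}"
  shows "Ex n N q (Uv H c i) = q i - c"
proof -
  have "finite H" using assms finite_subset by blast
  then have "card H > 0" using assms by (simp add: card_gt_0_iff)
  then show ?thesis unfolding Uv_def using Ex_cnt[OF assms(1,3), of q]
    by (simp add: Ex_diff[where f="\<lambda>x. real (cnt x H i) / real (card H)"] Ex_const Ex_multc[where c="1/real(card H)", simplified])
qed

lemma Ex_U2:
  assumes "H \<subseteq> {1..n}" "H \<noteq> {}" "i \<in> {1..N}"
  shows "Ex n N q (\<lambda>x. (Uv H c i x)\<^sup>2) = (q i - c)\<^sup>2 + q i * (1 - q i) / real (card H)"
proof -
  have "finite H" using assms finite_subset by blast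
  then have h: "real (card H) > 0" using assms by (simp add: card_gt_0_iff)
  define h where "h = real (card H)"
  have "(\<lambda>x. (Uv H c i x)\<^sup>2) = (\<lambda>x. (1/h^2) * (real (cnt x H i))\<^sup>2 - (2*c/h) * real (cnt x H i) + c^2)"
    unfolding Uv_def h_def using h by (intro ext) (simp add: power2_eq_square field_simps)
  then have "Ex n N q (\<lambda>x. (Uv H c i x)\<^sup>2) = (1/h^2) * Ex n N q (\<lambda>x. (real (cnt x H i))\<^sup>2) - (2*c/h) * Ex n N q (\<lambda>x. real (cnt x H i)) + c^2"
    by (simp only: Ex_add Ex_diff Ex_cmult Ex_const)
  also have "\<dots> = (1/h^2) * (h * q i + h * (h - 1) * (q i)\<^sup>2) - (2*c/h) * (h * q i) + c^2"
    using Ex_cnt[OF assms(1,3), of q] Ex_cnt2[OF assms(1,3), of q] unfolding h_def by simp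
  also have "\<dots> = (q i - c)\<^sup>2 + q i * (1 - q i) / h"
    using h unfolding h_def by (simp add: field_simps power2_eq_square)
  finally show ?thesis unfolding h_def .
qed

lemma var_sum_indep:
  assumes fin: "finite J"
    and ind: "\<And>i j. i \<in> J \<Longrightarrow> j \<in> J \<Longrightarrow> i \<noteq> j \<Longrightarrow> Ex n N q (\<lambda>x. X i x * X j x) = Ex n N q (X i) * Ex n N q (X j)"
  shows "Ex n N q (\<lambda>x. ((\<Sum>i\<in>J. X i x) - (\<Sum>i\<in>J. Ex n N q (X i)))\<^sup>2) =
         (\<Sum>i\<in>J. Ex n N q (\<lambda>x. (X i x)\<^sup>2) - (Ex n N q (X i))\<^sup>2)"
proof -
  define m where "m = (\<Sum>i\<in>J. Ex n N q (X i))"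
  have ES: "Ex n N q (\<lambda>x. \<Sum>i\<in>J. X i x) = m" unfolding m_def by (simp add: Ex_sum)
  have "Ex n N q (\<lambda>x. (\<Sum>i\<in>J. X i x)\<^sup>2) = (\<Sum>i\<in>J. \<Sum>j\<in>J. Ex n N q (\<lambda>x. X i x * X j x))"
    by (simp add: power2_eq_square sum_product Ex_sum)
  also have "\<dots> = (\<Sum>i\<in>J. (Ex n N q (\<lambda>x. (X i x)\<^sup>2) - (Ex n N q (X i))\<^sup>2) + Ex n N q (X i) * m)"
  proof (intro sum.cong refl)
    fix i assume i: "i \<in> J"
    have "(\<Sum>j\<in>J. Ex n N q (\<lambda>x. X i x * X j x)) = Ex n N q (\<lambda>x. X i x * X i x) + (\<Sum>j\<in>J-{i}. Ex n N q (\<lambda>x. X i x * X j x))"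
      using i fin by (simp add: sum.remove)
    also have "(\<Sum>j\<in>J-{i}. Ex n N q (\<lambda>x. X i x * X j x)) = (\<Sum>j\<in>J-{i}. Ex n N q (X i) * Ex n N q (X j))"
      using i by (intro sum.cong refl ind) auto
    also have "\<dots> = Ex n N q (X i) * (m - Ex n N q (X i))"
      unfolding m_def using i fin by (simp add: sum_distrib_left[symmetric] sum_diff1)
    finally show "(\<Sum>j\<in>J. Ex n N q (\<lambda>x. X i x * X j x)) = Ex n N q (\<lambda>x. (X i x)\<^sup>2) - (Ex n N q (X i))\<^sup>2 + Ex n N q (X i) * m"
      by (simp add: power2_eq_square algebra_simps)
  qed
  also have "\<dots> = (\<Sum>i\<in>J. Ex n N q (\<lambda>x. (X i x)\<^sup>2) - (Ex n N q (X i))\<^sup>2) + m * m"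
    by (simp add: sum.distrib sum_distrib_right[symmetric] m_def)
  finally have E2: "Ex n N q (\<lambda>x. (\<Sum>i\<in>J. X i x)\<^sup>2) = (\<Sum>i\<in>J. Ex n N q (\<lambda>x. (X i x)\<^sup>2) - (Ex n N q (X i))\<^sup>2) + m * m" .
  have "(\<lambda>x. ((\<Sum>i\<in>J. X i x) - m)\<^sup>2) = (\<lambda>x. (\<Sum>i\<in>J. X i x)\<^sup>2 - 2 * m * (\<Sum>i\<in>J. X i x) + m * m)"
    by (intro ext) (simp add: power2_eq_square algebra_simps)
  then have "Ex n N q (\<lambda>x. ((\<Sum>i\<in>J. X i x) - m)\<^sup>2) = Ex n N q (\<lambda>x. (\<Sum>i\<in>J. X i x)\<^sup>2) - 2 * m * m + m * m"
    by (simp add: Ex_add Ex_diff Ex_cmult Ex_const ES)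
  then show ?thesis using E2 unfolding m_def by simp
qed


lemma cells_col: "H \<subseteq> {1..n} \<Longrightarrow> i \<in> {1..N} \<Longrightarrow> H \<times> {i} \<subseteq> cells n N"
  unfolding cells_def by auto

lemma halfprod:
  fixes w c :: "nat \<Rightarrow> real"
  assumes nk: "n = 2*k" "k \<ge> 1" and J: "J \<subseteq> {1..N}"
  defines "X \<equiv> \<lambda>i x. w i * Uv {1..k} (c i) i x * Uv {k+1..n} (c i) i x"
  shows "Ex n N q (\<lambda>x. \<Sum>i\<in>J. X i x) = (\<Sum>i\<in>J. w i * (q i - c i)\<^sup>2)"
    and "Ex n N q (\<lambda>x. ((\<Sum>i\<in>J. X i x) - (\<Sum>i\<in>J. w i * (q i - c i)\<^sup>2))\<^sup>2) =
         (\<Sum>i\<in>J. (w i)\<^sup>2 * ((q i * (1 - q i) / k + (q i - c i)\<^sup>2)\<^sup>2 - (q i - c i)^4))"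
proof -
  have finJ: "finite J" using J finite_subset by blast
  have H1: "{1..k} \<subseteq> {1..n}" "{1..k} \<noteq> {}" and H2: "{k+1..n} \<subseteq> {1..n}" "{k+1..n} \<noteq> {}"
    using nk by auto
  have c1: "card {1..k} = k" and c2: "card {k+1..n} = k" using nk by auto
  have disj: "({1..k} \<times> {i}) \<inter> ({k+1..n} \<times> {i}) = {}" for i by auto
  have EX: "Ex n N q (X i) = w i * (q i - c i)\<^sup>2" if i: "i \<in> J" for i
  proof -
    have iN: "i \<in> {1..N}" using i J by auto
    have "Ex n N q (X i) = Ex n N q (\<lambda>x. (w i * Uv {1..k} (c i) i x) * Uv {k+1..n} (c i) i x)"
      unfolding X_def by simp
    also have "\<dots> = Ex n N q (\<lambda>x. w i * Uv {1..k} (c i) i x) * Ex n N q (Uv {k+1..n} (c i) i)"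
      by (rule indep[OF cells_col[OF H1(1) iN] cells_col[OF H2(1) iN] disj])
         (subst Uv_rB[of _ i "{1..k} \<times> {i}"], simp, rule refl, rule Uv_rB, simp)
    also have "\<dots> = w i * (q i - c i)\<^sup>2"
      using Ex_U[OF H1 iN, of q "c i"] Ex_U[OF H2 iN, of q "c i"] by (simp add: Ex_cmult power2_eq_square)
    finally show ?thesis .
  qed
  have EX2: "Ex n N q (\<lambda>x. (X i x)\<^sup>2) = (w i)\<^sup>2 * (q i * (1 - q i) / k + (q i - c i)\<^sup>2)\<^sup>2" if i: "i \<in> J" for i
  proof -
    have iN: "i \<in> {1..N}" using i J by auto
    have "Ex n N q (\<lambda>x. (X i x)\<^sup>2) = Ex n N q (\<lambda>x. ((w i)\<^sup>2 * (Uv {1..k} (c i) i x)\<^sup>2) * (Uv {k+1..n} (c i) i x)\<^sup>2)"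
      unfolding X_def by (simp add: power_mult_distrib)
    also have "\<dots> = Ex n N q (\<lambda>x. (w i)\<^sup>2 * (Uv {1..k} (c i) i x)\<^sup>2) * Ex n N q (\<lambda>x. (Uv {k+1..n} (c i) i x)\<^sup>2)"
      by (rule indep[OF cells_col[OF H1(1) iN] cells_col[OF H2(1) iN] disj])
         (subst Uv_rB[of _ i "{1..k} \<times> {i}"], simp, rule refl, subst Uv_rB[of _ i "{k+1..n} \<times> {i}"], simp, rule refl)
    also have "\<dots> = (w i)\<^sup>2 * Ex n N q (\<lambda>x. (Uv {1..k} (c i) i x)\<^sup>2) * Ex n N q (\<lambda>x. (Uv {k+1..n} (c i) i x)\<^sup>2)"
      by (simp only: Ex_cmult)
    also have "\<dots> = (w i)\<^sup>2 * ((q i - c i)\<^sup>2 + q i * (1 - q i) / real (card {1..k})) * ((q i - c i)\<^sup>2 + q i * (1 - q i) / real (card {k+1..n}))"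
      by (simp only: Ex_U2[OF H1 iN] Ex_U2[OF H2 iN])
    also have "\<dots> = (w i)\<^sup>2 * (q i * (1 - q i) / k + (q i - c i)\<^sup>2)\<^sup>2"
      unfolding c1 c2 using nk by (simp add: power2_eq_square field_simps)
    finally show ?thesis .
  qed
  have Xcol: "X i x = (\<lambda>u. w i * (real (card {l\<in>{1..k}. u (l,i)}) / real (card {1..k}) - c i) *
      (real (card {l\<in>{k+1..n}. u (l,i)}) / real (card {k+1..n}) - c i)) (rB ({1..n} \<times> {i}) x)" for i x
  proof -
    have a: "{1..k} \<times> {i} \<subseteq> {1..n} \<times> {i}" "{k+1..n} \<times> {i} \<subseteq> {1..n} \<times> {i}" using nk by auto
    show ?thesis unfolding X_def by (simp only: Uv_rB[OF a(1)] Uv_rB[OF a(2)])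
  qed
  have cross: "Ex n N q (\<lambda>x. X i x * X j x) = Ex n N q (X i) * Ex n N q (X j)"
    if "i \<in> J" "j \<in> J" "i \<noteq> j" for i j
    apply (rule indep[OF cells_col[of "{1..n}" n i N] cells_col[of "{1..n}" n j N]])
    prefer 6 apply (rule Xcol) prefer 6 apply (rule Xcol)
    using that J by auto
  show "Ex n N q (\<lambda>x. \<Sum>i\<in>J. X i x) = (\<Sum>i\<in>J. w i * (q i - c i)\<^sup>2)"
    by (simp add: Ex_sum EX)
  have "Ex n N q (\<lambda>x. ((\<Sum>i\<in>J. X i x) - (\<Sum>i\<in>J. Ex n N q (X i)))\<^sup>2) =
         (\<Sum>i\<in>J. Ex n N q (\<lambda>x. (X i x)\<^sup>2) - (Ex n N q (X i))\<^sup>2)"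
    by (rule var_sum_indep[OF finJ cross])
  also have "(\<Sum>i\<in>J. Ex n N q (X i)) = (\<Sum>i\<in>J. w i * (q i - c i)\<^sup>2)" by (simp add: EX)
  also have "(\<Sum>i\<in>J. Ex n N q (\<lambda>x. (X i x)\<^sup>2) - (Ex n N q (X i))\<^sup>2) =
      (\<Sum>i\<in>J. (w i)\<^sup>2 * ((q i * (1 - q i) / k + (q i - c i)\<^sup>2)\<^sup>2 - (q i - c i)^4))"
  proof (intro sum.cong refl)
    fix i assume i: "i \<in> J"
    show "Ex n N q (\<lambda>x. (X i x)\<^sup>2) - (Ex n N q (X i))\<^sup>2 =
      (w i)\<^sup>2 * ((q i * (1 - q i) / k + (q i - c i)\<^sup>2)\<^sup>2 - (q i - c i)^4)"
      by (simp only: EX[OF i] EX2[OF i]) (simp add: eval_nat_numeral algebra_simps)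
  qed
  finally show "Ex n N q (\<lambda>x. ((\<Sum>i\<in>J. X i x) - (\<Sum>i\<in>J. w i * (q i - c i)\<^sup>2))\<^sup>2) =
         (\<Sum>i\<in>J. (w i)\<^sup>2 * ((q i * (1 - q i) / k + (q i - c i)\<^sup>2)\<^sup>2 - (q i - c i)^4))" .
qed

lemma linstat:
  assumes n: "n \<ge> 1" and J: "J \<subseteq> {1..N}"
  shows "Ex n N q (\<lambda>x. \<Sum>i\<in>J. Uv {1..n} (c i) i x) = (\<Sum>i\<in>J. q i - c i)"
    and "Ex n N q (\<lambda>x. ((\<Sum>i\<in>J. Uv {1..n} (c i) i x) - (\<Sum>i\<in>J. q i - c i))\<^sup>2) =
         (\<Sum>i\<in>J. q i * (1 - q i) / n)"
proof -
  have finJ: "finite J" using J finite_subset by blast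
  have H: "{1..n} \<subseteq> {1..n}" "{1..n} \<noteq> {}" using n by auto
  have EX: "Ex n N q (Uv {1..n} (c i) i) = q i - c i" if "i \<in> J" for i
    using Ex_U[OF H, of i N q] that J by auto
  have cross: "Ex n N q (\<lambda>x. Uv {1..n} (c i) i x * Uv {1..n} (c j) j x) =
      Ex n N q (Uv {1..n} (c i) i) * Ex n N q (Uv {1..n} (c j) j)"
    if "i \<in> J" "j \<in> J" "i \<noteq> j" for i j
    apply (rule indep[OF cells_col[of "{1..n}" n i N] cells_col[of "{1..n}" n j N]])
    prefer 6 apply (rule Uv_rB, simp) prefer 6 apply (rule Uv_rB, simp)
    using that J by auto
  show "Ex n N q (\<lambda>x. \<Sum>i\<in>J. Uv {1..n} (c i) i x) = (\<Sum>i\<in>J. q i - c i)"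
    by (simp only: Ex_sum) (rule sum.cong[OF refl EX])
  have "Ex n N q (\<lambda>x. ((\<Sum>i\<in>J. Uv {1..n} (c i) i x) - (\<Sum>i\<in>J. Ex n N q (Uv {1..n} (c i) i)))\<^sup>2) =
         (\<Sum>i\<in>J. Ex n N q (\<lambda>x. (Uv {1..n} (c i) i x)\<^sup>2) - (Ex n N q (Uv {1..n} (c i) i))\<^sup>2)"
    by (rule var_sum_indep[OF finJ cross])
  also have "(\<Sum>i\<in>J. Ex n N q (Uv {1..n} (c i) i)) = (\<Sum>i\<in>J. q i - c i)" by (rule sum.cong[OF refl EX])
  also have "(\<Sum>i\<in>J. Ex n N q (\<lambda>x. (Uv {1..n} (c i) i x)\<^sup>2) - (Ex n N q (Uv {1..n} (c i) i))\<^sup>2) =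
      (\<Sum>i\<in>J. q i * (1 - q i) / n)"
  proof (intro sum.cong refl)
    fix i assume i: "i \<in> J"
    then have iN: "i \<in> {1..N}" using J by auto
    show "Ex n N q (\<lambda>x. (Uv {1..n} (c i) i x)\<^sup>2) - (Ex n N q (Uv {1..n} (c i) i))\<^sup>2 = q i * (1 - q i) / n"
      by (simp only: Ex_U2[OF H iN] EX[OF i]) simp
  qed
  finally show "Ex n N q (\<lambda>x. ((\<Sum>i\<in>J. Uv {1..n} (c i) i x) - (\<Sum>i\<in>J. q i - c i))\<^sup>2) =
         (\<Sum>i\<in>J. q i * (1 - q i) / n)" .
qed


lemma Prob_Ex: "Prob n N q P = Ex n N q (\<lambda>x. of_bool (P x))"
proof -
  have "Prob n N q P = (\<Sum>x\<in>config_space n N. if P x then weight n N q x else 0)"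
    unfolding Prob_def by (rule sum.inter_filter[OF finite_config])
  also have "\<dots> = Ex n N q (\<lambda>x. of_bool (P x))" unfolding Ex_def by (intro sum.cong) auto
  finally show ?thesis .
qed

lemma weight_nonneg: "in_cube N q \<Longrightarrow> weight n N q x \<ge> 0"
  unfolding weight_def in_cube_def by (intro prod_nonneg) auto

lemma Ex_mono:
  assumes "in_cube N q" "\<And>x. x \<in> config_space n N \<Longrightarrow> f x \<le> g x"
  shows "Ex n N q f \<le> Ex n N q g"
  unfolding Ex_def using assms weight_nonneg
  by (intro sum_mono mult_left_mono) auto

lemma Prob_mono:
  assumes "in_cube N q" "\<And>x. x \<in> config_space n N \<Longrightarrow> P x \<Longrightarrow> Q x"
  shows "Prob n N q P \<le> Prob n N q Q"
  unfolding Prob_Ex using assms by (intro Ex_mono) auto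

lemma Prob_nonneg: "in_cube N q \<Longrightarrow> Prob n N q P \<ge> 0"
  unfolding Prob_def using weight_nonneg by (intro sum_nonneg) auto

lemma Prob_union:
  assumes "in_cube N q"
  shows "Prob n N q (\<lambda>x. P x \<or> Q x) \<le> Prob n N q P + Prob n N q Q"
proof -
  have "Prob n N q (\<lambda>x. P x \<or> Q x) \<le> Ex n N q (\<lambda>x. of_bool (P x) + of_bool (Q x))"
    unfolding Prob_Ex using assms by (intro Ex_mono) auto
  then show ?thesis by (simp add: Ex_add Prob_Ex)
qed

lemma markov:
  assumes "in_cube N q" "a > 0" "\<And>x. x \<in> config_space n N \<Longrightarrow> f x \<ge> 0"
  shows "Prob n N q (\<lambda>x. f x \<ge> a) \<le> Ex n N q f / a"
proof -
  have "Prob n N q (\<lambda>x. f x \<ge> a) \<le> Ex n N q (\<lambda>x. (1/a) * f x)"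
    unfolding Prob_Ex using assms by (intro Ex_mono) auto
  also have "\<dots> = Ex n N q f / a" by (simp only: Ex_cmult) simp
  finally show ?thesis .
qed

lemma cheb:
  assumes "in_cube N q" "a > 0"
  shows "Prob n N q (\<lambda>x. \<bar>g x\<bar> \<ge> a) \<le> Ex n N q (\<lambda>x. (g x)\<^sup>2) / a\<^sup>2"
proof -
  have "Prob n N q (\<lambda>x. \<bar>g x\<bar> \<ge> a) \<le> Prob n N q (\<lambda>x. (g x)\<^sup>2 \<ge> a\<^sup>2)"
    using assms by (intro Prob_mono) (auto simp: abs_le_square_iff[symmetric])
  also have "\<dots> \<le> Ex n N q (\<lambda>x. (g x)\<^sup>2) / a\<^sup>2"
    using assms by (intro markov) auto
  finally show ?thesis .
qed

lemma prob_zero: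
  assumes "in_cube N q" "Ex n N q (\<lambda>x. (g x)\<^sup>2) = 0"
  shows "Prob n N q (\<lambda>x. g x \<noteq> 0) = 0"
proof -
  have nn: "\<And>x. x \<in> config_space n N \<Longrightarrow> weight n N q x * (g x)\<^sup>2 \<ge> 0"
    using weight_nonneg[OF assms(1)] by simp
  have z: "weight n N q x * (g x)\<^sup>2 = 0" if "x \<in> config_space n N" for x
    using assms(2) sum_nonneg_eq_0_iff[of "config_space n N" "\<lambda>x. weight n N q x * (g x)\<^sup>2", OF finite_config nn] that unfolding Ex_def by blast
  have "Prob n N q (\<lambda>x. g x \<noteq> 0) = (\<Sum>x\<in>config_space n N. weight n N q x * of_bool (g x \<noteq> 0))"
    unfolding Prob_Ex Ex_def ..
  also have "\<dots> = 0" using z by (intro sum.neutral) auto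
  finally show ?thesis .
qed

lemma Prob_le_one: "in_cube N q \<Longrightarrow> Prob n N q P \<le> 1"
proof -
  assume q: "in_cube N q"
  have "Prob n N q P \<le> Ex n N q (\<lambda>_. 1)" unfolding Prob_Ex using q by (intro Ex_mono) auto
  then show ?thesis by (simp add: Ex_const)
qed


lemma young0:
  fixes a b \<alpha> \<beta> :: real
  assumes "0 \<le> \<alpha>" "0 \<le> \<beta>" "\<alpha> + \<beta> = 1" "a \<ge> 0" "b \<ge> 0"
  shows "a powr \<alpha> * b powr \<beta> \<le> \<alpha> * a + \<beta> * b"
proof (cases "a = 0 \<or> b = 0")
  case True
  then show ?thesis using assms by auto
next
  case False
  then show ?thesis using Youngs_inequality_0[of \<alpha> \<beta> a b] assms by auto
qed

lemma holder_sum: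
  fixes a b :: "'i \<Rightarrow> real"
  assumes fin: "finite F" and ab: "0 \<le> \<alpha>" "0 \<le> \<beta>" "\<alpha> + \<beta> = 1"
    and nn: "\<And>i. i \<in> F \<Longrightarrow> a i \<ge> 0" "\<And>i. i \<in> F \<Longrightarrow> b i \<ge> 0"
  shows "(\<Sum>i\<in>F. a i powr \<alpha> * b i powr \<beta>) \<le> (\<Sum>i\<in>F. a i) powr \<alpha> * (\<Sum>i\<in>F. b i) powr \<beta>"
proof -
  define SA where "SA = (\<Sum>i\<in>F. a i)"
  define SB where "SB = (\<Sum>i\<in>F. b i)"
  have SA0: "SA \<ge> 0" "SB \<ge> 0" unfolding SA_def SB_def using nn by (auto intro: sum_nonneg)
  show ?thesis
  proof (cases "SA = 0 \<or> SB = 0")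
    case True
    then have "(\<forall>i\<in>F. a i = 0) \<or> (\<forall>i\<in>F. b i = 0)"
      unfolding SA_def SB_def using sum_nonneg_eq_0_iff[OF fin] nn by metis
    then have "(\<Sum>i\<in>F. a i powr \<alpha> * b i powr \<beta>) = 0" by auto
    then show ?thesis using SA0 unfolding SA_def[symmetric] SB_def[symmetric] by simp
  next
    case False
    then have pos: "SA > 0" "SB > 0" using SA0 by auto
    have "(\<Sum>i\<in>F. a i powr \<alpha> * b i powr \<beta>) = (\<Sum>i\<in>F. SA powr \<alpha> * SB powr \<beta> * ((a i / SA) powr \<alpha> * (b i / SB) powr \<beta>))"
      using pos nn by (intro sum.cong refl) (simp add: powr_divide divide_simps)
    also have "\<dots> = SA powr \<alpha> * SB powr \<beta> * (\<Sum>i\<in>F. (a i / SA) powr \<alpha> * (b i / SB) powr \<beta>)"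
      by (simp add: sum_distrib_left)
    also have "(\<Sum>i\<in>F. (a i / SA) powr \<alpha> * (b i / SB) powr \<beta>) \<le> (\<Sum>i\<in>F. \<alpha> * (a i / SA) + \<beta> * (b i / SB))"
      using nn pos ab by (intro sum_mono young0) auto
    also have "\<dots> = \<alpha> * ((\<Sum>i\<in>F. a i) / SA) + \<beta> * ((\<Sum>i\<in>F. b i) / SB)"
      by (simp add: sum.distrib sum_distrib_left sum_divide_distrib)
    also have "\<dots> = 1" using pos ab unfolding SA_def[symmetric] SB_def[symmetric] by simp
    finally show ?thesis using pos unfolding SA_def SB_def by simp
  qed
qed


lemma pw_pos: "x > 0 \<Longrightarrow> pw x a = x powr a"
  unfolding pw_def by auto

locale setting =
  fixes N n k :: nat and p :: "nat \<Rightarrow> real" and t cI cA :: real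
  assumes nk: "n = 2*k" "k \<ge> 1"
    and pmono: "\<And>i j. 1 \<le> i \<Longrightarrow> i \<le> j \<Longrightarrow> j \<le> N \<Longrightarrow> p j \<le> p i"
    and prange: "\<And>j. j \<in> {1..N} \<Longrightarrow> 0 \<le> p j \<and> p j \<le> 1/2"
    and t: "1 \<le> t" "t \<le> 2"
    and cI: "0 < cI" "cI \<le> 1" and cA: "0 < cA" "cA \<le> 1"
begin

definition "I = Ival cI n N p"
definition "A = Aval cI cA n N p t"
definition "r = r_of t"
definition "b = b_of t"
definition "S = (\<Sum>i\<in>{1..I}. pw (p i) r)"
definition "T = (\<Sum>i\<in>{I<..N}. p i)"
definition "cond a = (pw (p a) (b/2) \<ge> cA / (sqrt (real n) * S powr (1/4)))"

lemma n_pos: "n \<ge> 2" "real n > 0" using nk by auto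

lemma I_prop: "I \<le> N \<and> (\<Sum>i\<in>{I<..N}. (p i)\<^sup>2) \<le> cI / (real n)\<^sup>2"
proof -
  have "N \<le> N \<and> (\<Sum>i\<in>{N<..N}. (p i)\<^sup>2) \<le> cI / (real n)\<^sup>2" using cI by simp
  then show ?thesis unfolding I_def Ival_def by (rule LeastI)
qed

lemma I_le: "I \<le> N" and tail_sq: "(\<Sum>i\<in>{I<..N}. (p i)\<^sup>2) \<le> cI / (real n)\<^sup>2"
  using I_prop by auto

lemma I_min:
  assumes "I \<ge> 1"
  shows "(\<Sum>i\<in>{I-1<..N}. (p i)\<^sup>2) > cI / (real n)\<^sup>2"
proof (rule ccontr)
  assume "\<not> ?thesis"
  then have "I - 1 \<le> N \<and> (\<Sum>i\<in>{I-1<..N}. (p i)\<^sup>2) \<le> cI / (real n)\<^sup>2" using I_le by auto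
  then have "I \<le> I - 1" unfolding I_def Ival_def by (rule Least_le)
  then show False using assms by simp
qed

lemma split_I: "I \<ge> 1 \<Longrightarrow> {I-1<..N} = insert I {I<..N}"
  using I_le by auto

lemma p_nonneg: "j \<in> {1..N} \<Longrightarrow> p j \<ge> 0" using prange by auto
lemma p_le_half: "j \<in> {1..N} \<Longrightarrow> p j \<le> 1/2" using prange by auto

lemma pI_pos: assumes "I \<ge> 1" shows "p I > 0"
proof (rule ccontr)
  assume "\<not> p I > 0"
  then have "p I = 0" using p_nonneg[of I] assms I_le by force
  then have "(\<Sum>i\<in>{I-1<..N}. (p i)\<^sup>2) = (\<Sum>i\<in>{I<..N}. (p i)\<^sup>2)"
    using split_I[OF assms] by simp
  then show False using I_min[OF assms] tail_sq by simp
qed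

lemma p_pos: "i \<in> {1..I} \<Longrightarrow> p i > 0"
proof -
  assume i: "i \<in> {1..I}"
  then have "p I \<le> p i" using pmono[of i I] I_le by auto
  then show "p i > 0" using pI_pos i by fastforce
qed

lemma r_pos: "r > 0" unfolding r_def r_of_def using t by auto
lemma b_nonneg: "b \<ge> 0" unfolding b_def b_of_def using t by auto
lemma rb: "r + 2 * b = 2"
proof -
  have "r + 2 * b = (2*t + 2*(4-2*t))/(4-t)"
    unfolding r_def b_def r_of_def b_of_def by (simp add: add_divide_distrib[symmetric] algebra_simps)
  also have "\<dots> = 2" using t by (simp add: field_simps)
  finally show ?thesis .
qed
lemma rbt: "r * (2 - t) = b * t" unfolding r_def b_def r_of_def b_of_def using t by (simp add: field_simps)
lemma r_t: "t / (2 * r) = 1 - t / 4" unfolding r_def r_of_def using t by (simp add: field_simps)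
lemma rt2: "1 / r - (2 - t) / t = 1/2"
proof -
  have "1 / r = (4 - t) / (2 * t)" unfolding r_def r_of_def using t by simp
  then show ?thesis using t by (simp add: field_simps)
qed
lemma b_le: "b \<le> 2/3" unfolding b_def b_of_def using t by (simp add: field_simps)

lemma pw_r: "i \<in> {1..I} \<Longrightarrow> pw (p i) r = p i powr r"
  using p_pos pw_pos by blast

lemma pw_r_pos: "i \<in> {1..I} \<Longrightarrow> pw (p i) r > 0"
  using p_pos[of i] pw_r[of i] by simp

lemma S_pos: "I \<ge> 1 \<Longrightarrow> S > 0"
  unfolding S_def by (intro sum_pos pw_r_pos) auto

lemma S_nonneg: "S \<ge> 0"
  unfolding S_def using pw_r_pos by (intro sum_nonneg) (simp add: less_imp_le)

lemma A_alt: "A = (if (\<exists>a\<in>{1..I}. cond a) then Max {a\<in>{1..I}. cond a} else 0)"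
  unfolding A_def Aval_def cond_def I_def S_def r_def b_def Let_def by simp

lemma A_le: "A \<le> I"
  unfolding A_alt by (auto intro!: Max.boundedI)

lemma A_cond: "A \<ge> 1 \<Longrightarrow> cond A \<and> A \<in> {1..I}"
proof -
  assume "A \<ge> 1"
  then have ex: "\<exists>a\<in>{1..I}. cond a" unfolding A_alt by (auto split: if_splits)
  have "Max {a\<in>{1..I}. cond a} \<in> {a\<in>{1..I}. cond a}" using ex by (intro Max_in) auto
  moreover have "A = Max {a\<in>{1..I}. cond a}" using ex by (simp add: A_alt)
  ultimately have "A \<in> {a\<in>{1..I}. cond a}" by simp
  then show ?thesis by auto
qed

lemma not_cond: "a \<in> {A<..I} \<Longrightarrow> \<not> cond a"
proof
  assume a: "a \<in> {A<..I}" and c: "cond a"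
  then have ex: "\<exists>a\<in>{1..I}. cond a" by auto
  have "a \<le> Max {a\<in>{1..I}. cond a}" using a c by (intro Max_ge) auto
  then show False using a ex unfolding A_alt by auto
qed

lemma A_le_N: "A \<le> N" using A_le I_le by simp

end


lemma powr4: "(x::real) > 0 \<Longrightarrow> (x powr a)^4 = x powr (4*a)"
proof -
  assume x: "x > 0"
  have "(x powr a)^4 = (x powr a) powr (real 4)" using x by (simp add: powr_realpow)
  also have "\<dots> = x powr (4*a)" by (simp add: powr_powr mult.commute)
  finally show ?thesis .
qed

lemma pow_powr: "(x::real) > 0 \<Longrightarrow> (x ^ m) powr e = x powr (real m * e)"
proof -
  assume x: "x > 0"
  have "(x ^ m) powr e = (x powr real m) powr e" by (simp only: powr_realpow[OF x])
  also have "\<dots> = x powr (real m * e)" by (simp only: powr_powr)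
  finally show ?thesis .
qed

context setting begin

lemma fail_bound:
  assumes a: "a \<in> {A<..I}"
  shows "p a powr (2*b) * (real n)\<^sup>2 * S < cA^4"
proof -
  have aI: "a \<in> {1..I}" using a by auto
  have pa: "p a > 0" using p_pos[OF aI] .
  have Sp: "S > 0" using S_pos aI by auto
  have nc: "\<not> cond a" using not_cond[OF a] .
  define y where "y = p a powr (b/2)"
  have y: "y > 0" unfolding y_def using pa by simp
  have den: "sqrt (real n) * S powr (1/4) > 0" using Sp n_pos by simp
  have "y < cA / (sqrt (real n) * S powr (1/4))"
    using nc unfolding cond_def y_def pw_pos[OF pa] by simp
  then have lt: "y * (sqrt (real n) * S powr (1/4)) < cA"
    using den by (simp add: pos_less_divide_eq)
  have "(y * (sqrt (real n) * S powr (1/4)))^4 < cA^4"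
    using lt y den by (intro power_strict_mono) auto
  moreover have "(y * (sqrt (real n) * S powr (1/4)))^4 = p a powr (2*b) * (real n)\<^sup>2 * S"
  proof -
    have "(y * (sqrt (real n) * S powr (1/4)))^4 = y^4 * (sqrt (real n))^4 * (S powr (1/4))^4"
      by (simp add: power_mult_distrib)
    also have "y^4 = p a powr (2*b)" unfolding y_def using pa by (simp add: powr4)
    also have "(sqrt (real n))^4 = (real n)\<^sup>2"
      by (metis (no_types, lifting) numeral_Bit0 of_nat_0_le_iff power_add real_sqrt_pow2 power2_eq_square)
    also have "(S powr (1/4))^4 = S" using Sp by (simp add: powr4)
    finally show ?thesis .
  qed
  ultimately show ?thesis by simp
qed

lemma psq_split: "x > 0 \<Longrightarrow> x\<^sup>2 = x powr r * x powr (2*b)"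
proof -
  assume x: "x > 0"
  have "x powr r * x powr (2*b) = x powr 2" using rb by (simp add: powr_add[symmetric])
  then show ?thesis using x by (simp add: powr_realpow)
qed

lemma mid_sq_each:
  assumes a: "a \<in> {A<..I}"
  shows "(p a)\<^sup>2 * ((real n)\<^sup>2 * S) \<le> cA^4 * p a powr r"
proof -
  have aI: "a \<in> {1..I}" using a by auto
  have pa: "p a > 0" using p_pos[OF aI] .
  have "(p a)\<^sup>2 * ((real n)\<^sup>2 * S) = p a powr r * (p a powr (2*b) * (real n)\<^sup>2 * S)"
    using psq_split[OF pa] by (simp add: mult_ac)
  also have "\<dots> \<le> p a powr r * cA^4"
    using fail_bound[OF a] pa by (intro mult_left_mono) auto
  finally show ?thesis by (simp add: mult_ac)
qed

lemma sum_mid_r: "(\<Sum>i\<in>{A<..I}. p i powr r) \<le> S"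
proof -
  have "(\<Sum>i\<in>{A<..I}. p i powr r) = (\<Sum>i\<in>{A<..I}. pw (p i) r)"
    by (intro sum.cong refl) (auto simp: pw_r)
  also have "\<dots> \<le> S" unfolding S_def using pw_r_pos
    by (intro sum_mono2) (auto intro: less_imp_le)
  finally show ?thesis .
qed

lemma mid_sq: "(\<Sum>i\<in>{A<..I}. (p i)\<^sup>2) \<le> cA^4 / (real n)\<^sup>2"
proof (cases "{A<..I} = {}")
  case True then show ?thesis by simp
next
  case False
  then have I1: "I \<ge> 1" by auto
  have Sp: "S > 0" using S_pos[OF I1] .
  have "(\<Sum>i\<in>{A<..I}. (p i)\<^sup>2) * ((real n)\<^sup>2 * S) = (\<Sum>i\<in>{A<..I}. (p i)\<^sup>2 * ((real n)\<^sup>2 * S))"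
    by (simp add: sum_distrib_right)
  also have "\<dots> \<le> (\<Sum>i\<in>{A<..I}. cA^4 * p i powr r)"
    by (intro sum_mono mid_sq_each)
  also have "\<dots> = cA^4 * (\<Sum>i\<in>{A<..I}. p i powr r)" by (simp add: sum_distrib_left)
  also have "\<dots> \<le> cA^4 * S" using sum_mid_r by (intro mult_left_mono) auto
  finally have "(\<Sum>i\<in>{A<..I}. (p i)\<^sup>2) * ((real n)\<^sup>2 * S) \<le> cA^4 * S" .
  then show ?thesis using Sp n_pos by (simp add: field_simps)
qed

lemma powr_t_split: "x > 0 \<Longrightarrow> x powr t = x powr r * x powr (b * t / 2)"
proof -
  assume x: "x > 0"
  have "r + b * t / 2 = t"
  proof -
    have "r * (2 - t) = b * t" by (rule rbt)
    then have h1: "2 * r - t * r = t * b" by (simp add: algebra_simps)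
    have "t * (r + 2 * b) = t * 2" using rb by simp
    then have h2: "t * r + 2 * (t * b) = 2 * t" by (simp add: algebra_simps)
    from h1 h2 have "2 * r + t * b = 2 * t" by linarith
    then show ?thesis by (simp add: algebra_simps)
  qed
  then show ?thesis using x by (simp add: powr_add[symmetric])
qed

lemma mid_t_each:
  assumes a: "a \<in> {A<..I}"
  shows "p a powr t * (real n powr (t/2) * S powr (t/4)) \<le> cA powr t * p a powr r"
proof -
  have aI: "a \<in> {1..I}" using a by auto
  have pa: "p a > 0" using p_pos[OF aI] .
  have Sp: "S > 0" using S_pos aI by auto
  have fb: "p a powr (2*b) * (real n)\<^sup>2 * S \<le> cA^4" using fail_bound[OF a] by simp
  have "(p a powr (2*b) * (real n)\<^sup>2 * S) powr (t/4) \<le> (cA^4) powr (t/4)"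
    using fb pa Sp t by (intro powr_mono2) auto
  moreover have "(p a powr (2*b) * (real n)\<^sup>2 * S) powr (t/4) = p a powr (b*t/2) * (real n powr (t/2) * S powr (t/4))"
  proof -
    have "(p a powr (2*b) * (real n)\<^sup>2 * S) powr (t/4) = (p a powr (2*b)) powr (t/4) * ((real n)\<^sup>2) powr (t/4) * S powr (t/4)"
      using pa Sp by (simp add: powr_mult)
    also have "(p a powr (2*b)) powr (t/4) = p a powr (b*t/2)" by (simp add: powr_powr mult_ac)
    also have "((real n)\<^sup>2) powr (t/4) = real n powr (t/2)"
      using n_pos by (simp add: pow_powr)
    finally show ?thesis by (simp add: mult_ac)
  qed
  moreover have "(cA^4) powr (t/4) = cA powr t"
    using cA by (simp add: pow_powr)
  ultimately have k: "p a powr (b*t/2) * (real n powr (t/2) * S powr (t/4)) \<le> cA powr t" by simp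
  have "p a powr t * (real n powr (t/2) * S powr (t/4)) = p a powr r * (p a powr (b*t/2) * (real n powr (t/2) * S powr (t/4)))"
    using powr_t_split[OF pa] by (simp add: mult_ac)
  also have "\<dots> \<le> p a powr r * cA powr t" using k by (intro mult_left_mono) auto
  finally show ?thesis by (simp add: mult_ac)
qed

lemma mid_t: "(\<Sum>i\<in>{A<..I}. p i powr t) \<le> cA powr t * S powr (1 - t/4) / real n powr (t/2)"
proof (cases "{A<..I} = {}")
  case True then show ?thesis using cA by simp
next
  case False
  then have I1: "I \<ge> 1" by auto
  have Sp: "S > 0" using S_pos[OF I1] .
  define K where "K = real n powr (t/2) * S powr (t/4)"
  have K: "K > 0" unfolding K_def using Sp n_pos by simp
  have "(\<Sum>i\<in>{A<..I}. p i powr t) * K = (\<Sum>i\<in>{A<..I}. p i powr t * K)"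
    by (simp add: sum_distrib_right)
  also have "\<dots> \<le> (\<Sum>i\<in>{A<..I}. cA powr t * p i powr r)"
    unfolding K_def by (intro sum_mono mid_t_each)
  also have "\<dots> = cA powr t * (\<Sum>i\<in>{A<..I}. p i powr r)" by (simp add: sum_distrib_left)
  also have "\<dots> \<le> cA powr t * S" using sum_mid_r by (intro mult_left_mono) auto
  finally have "(\<Sum>i\<in>{A<..I}. p i powr t) \<le> cA powr t * S / K" using K by (simp add: pos_le_divide_eq)
  also have "cA powr t * S / K = cA powr t * S powr (1 - t/4) / real n powr (t/2)"
  proof -
    have e: "S powr (1 - t/4) * S powr (t/4) = S" using Sp by (simp add: powr_add[symmetric])
    have "cA powr t * S / K = cA powr t * (S powr (1 - t/4) * S powr (t/4)) / (real n powr (t/2) * S powr (t/4))"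
      unfolding K_def e ..
    also have "\<dots> = cA powr t * S powr (1 - t/4) / real n powr (t/2)" using Sp by simp
    finally show ?thesis .
  qed
  finally show ?thesis .
qed

lemma T_nonneg: "T \<ge> 0" unfolding T_def using p_nonneg I_le by (intro sum_nonneg) auto

lemma tail_t: "(\<Sum>i\<in>{I<..N}. p i powr t) \<le> T powr (2-t) * real n powr (2-2*t)"
proof -
  have "(\<Sum>i\<in>{I<..N}. p i powr t) = (\<Sum>i\<in>{I<..N}. p i powr (2-t) * ((p i)\<^sup>2) powr (t-1))"
  proof (intro sum.cong refl)
    fix i assume i: "i \<in> {I<..N}"
    then have "p i \<ge> 0" using p_nonneg by auto
    then show "p i powr t = p i powr (2-t) * ((p i)\<^sup>2) powr (t-1)"
    proof (cases "p i = 0")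
      case False
      then have "p i > 0" using \<open>p i \<ge> 0\<close> by simp
      then have "((p i)\<^sup>2) powr (t-1) = p i powr (2*(t-1))"
        by (simp add: pow_powr)
      then show ?thesis using \<open>p i > 0\<close> by (simp add: powr_add[symmetric])
    qed simp
  qed
  also have "\<dots> \<le> (\<Sum>i\<in>{I<..N}. p i) powr (2-t) * (\<Sum>i\<in>{I<..N}. (p i)\<^sup>2) powr (t-1)"
    using t p_nonneg I_le by (intro holder_sum) auto
  also have "\<dots> \<le> T powr (2-t) * (cI / (real n)\<^sup>2) powr (t-1)"
    unfolding T_def[symmetric] using tail_sq t
    by (intro mult_left_mono powr_mono2) (auto intro: sum_nonneg)
  also have "\<dots> \<le> T powr (2-t) * (1 / (real n)\<^sup>2) powr (t-1)"
    using cI t n_pos by (intro mult_left_mono powr_mono2) (auto simp: divide_right_mono)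
  also have "(1 / (real n)\<^sup>2) powr (t-1) = real n powr (2 - 2*t)"
  proof -
    have "(1 / (real n)\<^sup>2) = real n powr (-2)" using n_pos by (simp add: powr_minus powr_numeral divide_inverse)
    then show ?thesis by (simp add: powr_powr algebra_simps)
  qed
  finally show ?thesis .
qed

lemma mid_l1: "(\<Sum>i\<in>{A<..I}. p i) \<le> (2/cI) * (T + 1/real n)"
proof (cases "{A<..I} = {}")
  case True then show ?thesis using cI T_nonneg n_pos by simp
next
  case False
  then have I1: "I \<ge> 1" by auto
  have pI: "p I > 0" using pI_pos[OF I1] .
  have nn: "real n > 0" using n_pos by simp
  have "(\<Sum>i\<in>{A<..I}. p i) \<le> (\<Sum>i\<in>{A<..I}. (p i)\<^sup>2 / p I)"
  proof (intro sum_mono)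
    fix i assume i: "i \<in> {A<..I}"
    then have le: "p I \<le> p i" using pmono[of i I] I_le by auto
    have "p i * p I \<le> p i * p i" using le pI by (intro mult_left_mono) auto
    then show "p i \<le> (p i)\<^sup>2 / p I" using pI by (simp add: le_divide_eq power2_eq_square)
  qed
  also have "\<dots> = (\<Sum>i\<in>{A<..I}. (p i)\<^sup>2) / p I" by (simp add: sum_divide_distrib)
  also have "\<dots> \<le> (cA^4 / (real n)\<^sup>2) / p I" using mid_sq pI by (intro divide_right_mono) auto
  also have "\<dots> \<le> (1 / (real n)\<^sup>2) / p I"
  proof -
    have c4: "cA^4 \<le> 1" using cA by (simp add: power_le_one)
    then have "cA^4 / (real n)\<^sup>2 \<le> 1 / (real n)\<^sup>2" using nn by (intro divide_right_mono) auto
    then show ?thesis by (rule divide_right_mono) (use pI in simp)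
  qed
  also have "\<dots> \<le> (2/cI) * (T + 1/real n)"
  proof -
    have "(\<Sum>i\<in>{I<..N}. (p i)\<^sup>2) \<le> (\<Sum>i\<in>{I<..N}. p I * p i)"
    proof (intro sum_mono)
      fix i assume i: "i \<in> {I<..N}"
      then have "p i \<le> p I" "p i \<ge> 0" using pmono[of I i] I1 p_nonneg by auto
      then show "(p i)\<^sup>2 \<le> p I * p i" by (simp add: power2_eq_square mult_right_mono)
    qed
    also have "\<dots> = p I * T" unfolding T_def by (simp add: sum_distrib_left)
    finally have tl: "(\<Sum>i\<in>{I<..N}. (p i)\<^sup>2) \<le> p I * T" .
    have key: "cI / (real n)\<^sup>2 < (p I)\<^sup>2 + p I * T"
      using I_min[OF I1] tl unfolding split_I[OF I1] by simp
    define u where "u = 1 / (real n)\<^sup>2"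
    have u: "u > 0" unfolding u_def using nn by simp
    have key': "cI * u < (p I)\<^sup>2 + p I * T" using key unfolding u_def by simp
    show ?thesis
    proof (cases "(p I)\<^sup>2 \<ge> cI * u / 2")
      case True
      have "(p I * real n)\<^sup>2 = (p I)\<^sup>2 * (real n)\<^sup>2" by (simp add: power_mult_distrib)
      also have "\<dots> \<ge> cI * u / 2 * (real n)\<^sup>2" using True by (intro mult_right_mono) auto
      also have "cI * u / 2 * (real n)\<^sup>2 = cI / 2" unfolding u_def using nn by simp
      finally have "(p I * real n)\<^sup>2 \<ge> cI / 2" .
      moreover have "cI / 2 \<ge> (cI/2)\<^sup>2"
      proof -
        have "(cI/2) * (cI/2) \<le> (cI/2) * 1" using cI by (intro mult_left_mono) auto
        then show ?thesis by (simp add: power2_eq_square)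
      qed
      ultimately have "(p I * real n)\<^sup>2 \<ge> (cI/2)\<^sup>2" by simp
      then have pn: "p I * real n \<ge> cI / 2"
        by (rule power2_le_imp_le) (use pI nn in simp)
      have "(1 / (real n)\<^sup>2) / p I = (1/real n) * (1 / (p I * real n))"
        by (simp add: power2_eq_square)
      also have "\<dots> \<le> (1/real n) * (2 / cI)"
      proof (intro mult_left_mono)
        have "1 / (p I * real n) \<le> 1 / (cI / 2)"
          using pn cI by (intro frac_le) auto
        then show "1 / (p I * real n) \<le> 2 / cI" by simp
      qed (use nn in simp)
      also have "\<dots> = (2/cI) * (1/real n)" by (simp only: mult.commute)
      also have "\<dots> \<le> (2/cI) * (T + 1/real n)" using T_nonneg cI by (intro mult_left_mono) auto
      finally show ?thesis .
    next
      case False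
      then have "p I * T > cI * u / 2" using key' by simp
      then have "u * cI < 2 * (p I * T)" using cI by (simp add: field_simps)
      then have "u < 2 * (p I * T) / cI" using cI by (simp add: pos_less_divide_eq)
      also have "2 * (p I * T) / cI = ((2/cI) * T) * p I" by simp
      finally have "u / p I < (2/cI) * T" using pI by (simp add: pos_divide_less_eq)
      then have "(1 / (real n)\<^sup>2) / p I \<le> (2/cI) * T" unfolding u_def by simp
      also have "\<dots> \<le> (2/cI) * (T + 1/real n)" using nn cI by (intro mult_left_mono) auto
      finally show ?thesis .
    qed
  qed
  finally show ?thesis .
qed

end


lemma sq_powr: "(x::real) > 0 \<Longrightarrow> (x powr a)\<^sup>2 = x powr (2*a)"
proof -
  assume x: "x > 0"
  have "(x powr a) powr (real 2) = (x powr a)\<^sup>2" using x by (intro powr_realpow) simp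
  then have "(x powr a)\<^sup>2 = (x powr a) powr (real 2)" by simp
  also have "\<dots> = x powr (2*a)" by (simp add: powr_powr mult.commute)
  finally show ?thesis .
qed

context setting begin

definition "rho1 = sqrt (S powr (1/r) / real n)"
definition "tau = pw T ((2-t)/t) / real n powr ((2*t-2)/t)"
definition "Rt = rho1 + tau + 1 / real n"

lemma rate_eq: "rate cI n N p t = Rt"
proof -
  have "(\<Sum>j\<in>{1..I}. \<bar>p j\<bar> powr r) = S"
  proof (unfold S_def, intro sum.cong refl)
    fix j assume j: "j \<in> {1..I}"
    then have "p j > 0" by (rule p_pos)
    then show "\<bar>p j\<bar> powr r = pw (p j) r" using pw_r[OF j] by simp
  qed
  then show ?thesis
    unfolding rate_def Rt_def rho1_def tau_def lnorm_on_def Let_def I_def[symmetric] T_def[symmetric] r_def[symmetric]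
    by simp
qed

lemma rho1_nonneg: "rho1 \<ge> 0" unfolding rho1_def using S_nonneg by simp

lemma tau_nonneg: "tau \<ge> 0" unfolding tau_def pw_def using T_nonneg by simp

lemma Rt_pos: "Rt > 0" unfolding Rt_def using rho1_nonneg tau_nonneg n_pos by (simp add: add_nonneg_pos)

lemma Rt_ge: "rho1 \<le> Rt" "tau \<le> Rt" "1 / real n \<le> Rt"
  unfolding Rt_def using rho1_nonneg tau_nonneg n_pos by auto

lemma rho1_powr_t: "rho1 powr t = S powr (1 - t/4) / real n powr (t/2)"
proof -
  have "rho1 = (S powr (1/r) / real n) powr (1/2)"
    unfolding rho1_def using S_nonneg n_pos by (simp add: powr_half_sqrt)
  then have "rho1 powr t = (S powr (1/r) / real n) powr (t/2)" by (simp add: powr_powr)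
  also have "\<dots> = S powr (t / (2*r)) / real n powr (t/2)"
    by (simp add: powr_divide powr_powr S_nonneg mult.commute)
  also have "t / (2*r) = 1 - t/4" by (rule r_t)
  finally show ?thesis .
qed

lemma tau_powr_t: "T powr (2-t) * real n powr (2-2*t) \<le> tau powr t"
proof (cases "t = 2")
  case True
  have nn: "real n > 0" using n_pos by simp
  have Tle: "T powr (2-t) \<le> 1" using True by (simp add: powr_def)
  have "tau = 1 / real n" unfolding tau_def pw_def using True by simp
  then have "tau powr t = (1 / real n) powr 2" using True by simp
  also have "\<dots> = 1 / (real n)\<^sup>2" using nn by (simp add: powr_divide powr_numeral)
  also have "\<dots> = real n powr (2-2*t)"
  proof -
    have "real n powr (2-2*t) = real n powr (- 2)" using True by simp
    also have "\<dots> = inverse (real n powr 2)" by (rule powr_minus)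
    also have "\<dots> = 1 / (real n)\<^sup>2" using nn by (simp add: powr_numeral divide_inverse)
    finally show ?thesis by simp
  qed
  finally have e: "tau powr t = real n powr (2-2*t)" .
  have "T powr (2-t) * real n powr (2-2*t) \<le> 1 * real n powr (2-2*t)"
    using Tle by (intro mult_right_mono) auto
  then show ?thesis using e by simp
next
  case False
  have tp: "t > 0" using t by simp
  have a0: "(2-t)/t \<noteq> 0" using t False by simp
  have "tau = T powr ((2-t)/t) / real n powr ((2*t-2)/t)" unfolding tau_def pw_def using a0 by simp
  then have "tau powr t = (T powr ((2-t)/t)) powr t / (real n powr ((2*t-2)/t)) powr t"
    by (simp only: powr_divide)
  also have "\<dots> = T powr ((2-t)/t * t) / real n powr ((2*t-2)/t * t)"
    by (simp only: powr_powr)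
  also have "(2-t)/t * t = 2 - t" using tp by simp
  also have "(2*t-2)/t * t = 2*t - 2" using tp by simp
  also have "T powr (2-t) / real n powr (2*t-2) = T powr (2-t) * real n powr (2-2*t)"
  proof -
    have "real n powr (2-2*t) = real n powr (-(2*t-2))" by simp
    also have "\<dots> = inverse (real n powr (2*t-2))" by (rule powr_minus)
    finally show ?thesis by (simp add: divide_inverse)
  qed
  finally show ?thesis by simp
qed

lemma split_R: "{A<..N} = {A<..I} \<union> {I<..N}" "{A<..I} \<inter> {I<..N} = {}"
  using A_le I_le by auto

lemma cAt_le1: "cA powr t \<le> 1" using cA t by (intro powr_le1) auto

lemma R_p_t: "(\<Sum>i\<in>{A<..N}. p i powr t) \<le> 2 * Rt powr t"
proof -
  have "(\<Sum>i\<in>{A<..N}. p i powr t) = (\<Sum>i\<in>{A<..I}. p i powr t) + (\<Sum>i\<in>{I<..N}. p i powr t)"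
    unfolding split_R(1) by (rule sum.union_disjoint) (use split_R(2) in auto)
  also have "(\<Sum>i\<in>{A<..I}. p i powr t) \<le> Rt powr t"
  proof -
    have "(\<Sum>i\<in>{A<..I}. p i powr t) \<le> cA powr t * S powr (1 - t/4) / real n powr (t/2)" by (rule mid_t)
    also have "\<dots> \<le> 1 * S powr (1 - t/4) / real n powr (t/2)"
      using cAt_le1 n_pos by (intro divide_right_mono mult_right_mono) auto
    also have "\<dots> = rho1 powr t" using rho1_powr_t by simp
    also have "\<dots> \<le> Rt powr t" using Rt_ge rho1_nonneg t by (intro powr_mono2) auto
    finally show ?thesis .
  qed
  also have "(\<Sum>i\<in>{I<..N}. p i powr t) \<le> Rt powr t"
  proof -
    have "(\<Sum>i\<in>{I<..N}. p i powr t) \<le> T powr (2-t) * real n powr (2-2*t)" by (rule tail_t)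
    also have "\<dots> \<le> tau powr t" by (rule tau_powr_t)
    also have "\<dots> \<le> Rt powr t" using Rt_ge tau_nonneg t by (intro powr_mono2) auto
    finally show ?thesis .
  qed
  finally show ?thesis by simp
qed

lemma P_R_bound: "(\<Sum>i\<in>{A<..N}. p i) \<le> (2/cI + 1) * (T + 1/real n)"
proof -
  have "(\<Sum>i\<in>{A<..N}. p i) = (\<Sum>i\<in>{A<..I}. p i) + T"
    unfolding split_R(1) T_def by (rule sum.union_disjoint) (use split_R(2) in auto)
  also have "\<dots> \<le> (2/cI) * (T + 1/real n) + (T + 1/real n)" using mid_l1 n_pos by (intro add_mono) auto
  finally show ?thesis by (simp add: algebra_simps)
qed

lemma P_R_nonneg: "(\<Sum>i\<in>{A<..N}. p i) \<ge> 0" using p_nonneg by (intro sum_nonneg) auto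

lemma condA_bound:
  assumes "A \<ge> 1"
  shows "p A powr (-b) \<le> real n * sqrt S / cA\<^sup>2"
proof -
  have AI: "A \<in> {1..I}" and c: "cond A" using A_cond[OF assms] by auto
  have pA: "p A > 0" using p_pos[OF AI] .
  have Sp: "S > 0" using S_pos AI by auto
  have nn: "real n > 0" using n_pos by simp
  define y where "y = p A powr (b/2)"
  have y: "y > 0" unfolding y_def using pA by simp
  have den: "sqrt (real n) * S powr (1/4) > 0" using Sp nn by simp
  have "y \<ge> cA / (sqrt (real n) * S powr (1/4))"
    using c unfolding cond_def y_def pw_pos[OF pA] by simp
  then have ge: "y * (sqrt (real n) * S powr (1/4)) \<ge> cA"
    using den by (simp add: pos_divide_le_eq)
  have "cA\<^sup>2 \<le> (y * (sqrt (real n) * S powr (1/4)))\<^sup>2"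
    using ge cA by (intro power_mono) auto
  also have "(y * (sqrt (real n) * S powr (1/4)))\<^sup>2 = p A powr b * (real n * sqrt S)"
  proof -
    have "(y * (sqrt (real n) * S powr (1/4)))\<^sup>2 = y\<^sup>2 * (sqrt (real n))\<^sup>2 * (S powr (1/4))\<^sup>2"
      by (simp add: power_mult_distrib)
    also have "y\<^sup>2 = p A powr b" unfolding y_def using sq_powr[OF pA, of "b/2"] by simp
    also have "(S powr (1/4))\<^sup>2 = sqrt S" using sq_powr[OF Sp, of "1/4"] Sp by (simp add: powr_half_sqrt)
    finally show ?thesis using nn by simp
  qed
  finally have k: "cA\<^sup>2 \<le> p A powr b * (real n * sqrt S)" .
  have "p A powr (-b) = 1 / p A powr b" by (simp add: powr_minus divide_inverse)
  also have "\<dots> \<le> real n * sqrt S / cA\<^sup>2"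
    using k pA cA by (simp add: divide_simps mult.commute)
  finally show ?thesis .
qed

lemma bw1:
  assumes i: "i \<in> {1..A}"
  shows "p i powr (-b) \<le> real n * sqrt S / cA\<^sup>2"
proof -
  have A1: "A \<ge> 1" using i by auto
  have AI: "A \<in> {1..I}" using A_cond[OF A1] by auto
  have pA: "p A > 0" using p_pos[OF AI] .
  have "p A \<le> p i" using pmono[of i A] i A_le_N by auto
  then have "p A powr b \<le> p i powr b" using pA b_nonneg by (intro powr_mono2) auto
  then have "p i powr (-b) \<le> p A powr (-b)"
    using pA by (simp add: powr_minus divide_inverse le_imp_inverse_le)
  also have "\<dots> \<le> real n * sqrt S / cA\<^sup>2" by (rule condA_bound[OF A1])
  finally show ?thesis .
qed

lemma pr_le_S: "i \<in> {1..I} \<Longrightarrow> p i powr r \<le> S"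
proof -
  assume i: "i \<in> {1..I}"
  have "p i powr r = pw (p i) r" using pw_r[OF i] by simp
  also have "\<dots> \<le> S" unfolding S_def using i pw_r_pos
    by (intro member_le_sum) (auto intro: less_imp_le)
  finally show ?thesis .
qed

lemma bw2: "i \<in> {1..I} \<Longrightarrow> (p i powr (-b))\<^sup>2 * (p i)\<^sup>2 = p i powr r"
proof -
  assume i: "i \<in> {1..I}"
  have pi: "p i > 0" using p_pos[OF i] .
  have "(p i powr (-b))\<^sup>2 = p i powr (-2*b)" using sq_powr[OF pi, of "-b"] by simp
  moreover have "(p i)\<^sup>2 = p i powr 2" using pi by (simp add: powr_numeral)
  ultimately have "(p i powr (-b))\<^sup>2 * (p i)\<^sup>2 = p i powr (-2*b) * p i powr 2" by simp
  also have "\<dots> = p i powr (2 - 2*b)" by (simp add: powr_add[symmetric])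
  also have "2 - 2*b = r" using rb by simp
  finally show ?thesis .
qed

lemma bw3: "i \<in> {1..I} \<Longrightarrow> p i powr (-b) * p i \<le> sqrt S"
proof -
  assume i: "i \<in> {1..I}"
  have pi: "p i > 0" using p_pos[OF i] .
  have "(p i powr (-b) * p i)\<^sup>2 = p i powr r" using bw2[OF i] by (simp add: power_mult_distrib)
  moreover have "p i powr (-b) * p i \<ge> 0" using pi by simp
  ultimately have "p i powr (-b) * p i = sqrt (p i powr r)"
    by (metis real_sqrt_unique)
  also have "\<dots> \<le> sqrt S" using pr_le_S[OF i] by simp
  finally show ?thesis .
qed

end


context setting begin

definition "w i = pw (p i) (- b)"

lemma ndiv: "n div 2 = k" using nk by simp
lemma card_H: "card {1..k} = k" "card {k+1..n} = k" using nk by auto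

lemma T_bulk_eq: "T_bulk cI cA n N p t x = (\<Sum>i\<in>{1..A}. w i * Uv {1..k} (p i) i x * Uv {k+1..n} (p i) i x)"
  unfolding T_bulk_def Let_def A_def[symmetric] b_def[symmetric] w_def Uv_def card_H ndiv ..

lemma T1_eq: "T1 cI cA n N p t x = (\<Sum>i\<in>{A<..N}. Uv {1..n} (p i) i x)"
  unfolding T1_def A_def[symmetric] Uv_def using nk by simp

lemma SA_eq: "(\<Sum>i\<in>{1..Aval cI cA n N p t}. pw (p i) (r_of t)) = (\<Sum>i\<in>{1..A}. p i powr r)"
  unfolding A_def[symmetric] r_def[symmetric] using A_le by (intro sum.cong refl) (auto simp: pw_r)

lemma bulk_mean:
  "Ex n N q (T_bulk cI cA n N p t) = (\<Sum>i\<in>{1..A}. w i * (q i - p i)\<^sup>2)"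
  unfolding T_bulk_eq using halfprod(1)[OF nk, where J="{1..A}" and N=N and w=w and c=p and q=q] A_le_N by auto

lemma bulk_var:
  "Ex n N q (\<lambda>x. (T_bulk cI cA n N p t x - (\<Sum>i\<in>{1..A}. w i * (q i - p i)\<^sup>2))\<^sup>2) =
   (\<Sum>i\<in>{1..A}. (w i)\<^sup>2 * ((q i * (1 - q i) / k + (q i - p i)\<^sup>2)\<^sup>2 - (q i - p i)^4))"
  unfolding T_bulk_eq using halfprod(2)[OF nk, where J="{1..A}" and N=N and w=w and c=p and q=q] A_le_N by auto

lemma T1_mean: "Ex n N q (T1 cI cA n N p t) = (\<Sum>i\<in>{A<..N}. q i - p i)"
  unfolding T1_eq by (rule linstat(1)) (use n_pos in auto)

lemma T1_var: "Ex n N q (\<lambda>x. (T1 cI cA n N p t x - (\<Sum>i\<in>{A<..N}. q i - p i))\<^sup>2) = (\<Sum>i\<in>{A<..N}. q i * (1 - q i) / n)"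
  unfolding T1_eq by (rule linstat(2)) (use n_pos in auto)

lemma p_cube: "in_cube N p" unfolding in_cube_def using prange by fastforce

end


lemma Prob_False: "Prob n N q (\<lambda>x. False) = 0" unfolding Prob_def by simp

lemma cbar_sq: "eta > 0 \<Longrightarrow> (cbar eta)\<^sup>2 = 16 / eta"
  unfolding cbar_def by (simp add: power_divide)

lemma cbar_pos: "eta > 0 \<Longrightarrow> cbar eta > 0" unfolding cbar_def by simp

context setting begin

lemma w_pos: "i \<in> {1..I} \<Longrightarrow> w i = p i powr (-b)"
  unfolding w_def using p_pos pw_pos by blast

definition "SA = (\<Sum>i\<in>{1..A}. p i powr r)"

lemma SA_pos: "A \<ge> 1 \<Longrightarrow> SA > 0"
  unfolding SA_def
proof (intro sum_pos)
  fix i assume "i \<in> {1..A}"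
  then have "i \<in> {1..I}" using A_le by auto
  then show "0 < p i powr r" using p_pos[of i] by simp
qed auto

lemma SA_le_S: "SA \<le> S"
proof -
  have "SA = (\<Sum>i\<in>{1..A}. pw (p i) r)" unfolding SA_def using A_le by (intro sum.cong refl) (auto simp: pw_r)
  also have "\<dots> \<le> S" unfolding S_def using A_le pw_r_pos by (intro sum_mono2) (auto intro: less_imp_le)
  finally show ?thesis .
qed

lemma psi_bulk_iff: "psi_bulk eta cI cA n N p t x \<longleftrightarrow> T_bulk cI cA n N p t x > cbar eta / real n * sqrt SA"
  unfolding psi_bulk_def SA_eq SA_def ..

lemma typeI_bulk:
  assumes eta: "eta > 0"
  shows "Prob n N p (psi_bulk eta cI cA n N p t) \<le> eta / 4"
proof (cases "A = 0")
  case True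
  have "Prob n N p (psi_bulk eta cI cA n N p t) \<le> Prob n N p (\<lambda>x. False)"
    using p_cube by (intro Prob_mono) (auto simp: psi_bulk_iff T_bulk_eq SA_def True)
  then show ?thesis using eta by (simp add: Prob_False)
next
  case False
  then have A1: "A \<ge> 1" by simp
  have nn: "real n > 0" "real k > 0" using n_pos nk by auto
  have SAp: "SA > 0" using SA_pos[OF A1] .
  define \<theta> where "\<theta> = cbar eta / real n * sqrt SA"
  have th: "\<theta> > 0" unfolding \<theta>_def using SAp cbar_pos[OF eta] nn by simp
  have mean0: "(\<Sum>i\<in>{1..A}. w i * (p i - p i)\<^sup>2) = 0" by simp
  have var: "Ex n N p (\<lambda>x. (T_bulk cI cA n N p t x - 0)\<^sup>2) \<le> SA / (real k)\<^sup>2"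
  proof -
    have "Ex n N p (\<lambda>x. (T_bulk cI cA n N p t x - 0)\<^sup>2) =
      (\<Sum>i\<in>{1..A}. (w i)\<^sup>2 * ((p i * (1 - p i) / k + (p i - p i)\<^sup>2)\<^sup>2 - (p i - p i)^4))"
      using bulk_var[of p] by simp
    also have "\<dots> \<le> (\<Sum>i\<in>{1..A}. p i powr r / (real k)\<^sup>2)"
    proof (intro sum_mono)
      fix i assume i: "i \<in> {1..A}"
      then have iI: "i \<in> {1..I}" using A_le by auto
      have pi: "0 < p i" "p i \<le> 1/2" using p_pos[OF iI] p_le_half[of i] iI I_le by auto
      have "(w i)\<^sup>2 * ((p i * (1 - p i) / k + (p i - p i)\<^sup>2)\<^sup>2 - (p i - p i)^4) = (w i)\<^sup>2 * (p i * (1 - p i))\<^sup>2 / (real k)\<^sup>2"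
        by (simp add: power_divide)
      also have "\<dots> \<le> (w i)\<^sup>2 * (p i)\<^sup>2 / (real k)\<^sup>2"
        using pi by (intro divide_right_mono mult_left_mono power_mono) (auto simp: mult_le_cancel_left1)
      also have "(w i)\<^sup>2 * (p i)\<^sup>2 = p i powr r" using bw2[OF iI] w_pos[OF iI] by simp
      finally show "(w i)\<^sup>2 * ((p i * (1 - p i) / k + (p i - p i)\<^sup>2)\<^sup>2 - (p i - p i)^4) \<le> p i powr r / (real k)\<^sup>2" .
    qed
    also have "\<dots> = SA / (real k)\<^sup>2" unfolding SA_def by (simp add: sum_divide_distrib)
    finally show ?thesis .
  qed
  have "Prob n N p (psi_bulk eta cI cA n N p t) \<le> Prob n N p (\<lambda>x. \<bar>T_bulk cI cA n N p t x - 0\<bar> \<ge> \<theta>)"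
    using p_cube by (intro Prob_mono) (auto simp: psi_bulk_iff \<theta>_def)
  also have "\<dots> \<le> Ex n N p (\<lambda>x. (T_bulk cI cA n N p t x - 0)\<^sup>2) / \<theta>\<^sup>2"
    by (rule cheb[OF p_cube th])
  also have "\<dots> \<le> (SA / (real k)\<^sup>2) / \<theta>\<^sup>2" using var th by (intro divide_right_mono) auto
  also have "(SA / (real k)\<^sup>2) / \<theta>\<^sup>2 = eta / 4"
  proof -
    have "\<theta>\<^sup>2 = (cbar eta)\<^sup>2 / (real n)\<^sup>2 * SA" unfolding \<theta>_def using SAp
      by (simp add: power_mult_distrib power_divide)
    also have "\<dots> = 16 / eta / (real n)\<^sup>2 * SA" using cbar_sq[OF eta] by simp
    finally have e: "\<theta>\<^sup>2 = 16 / eta / (real n)\<^sup>2 * SA" .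
    have "(SA / (real k)\<^sup>2) / (16 / eta / (real n)\<^sup>2 * SA) = eta / 4"
      using SAp eta nn nk(1) by (simp add: field_simps power2_eq_square)
    then show ?thesis by (simp only: e)
  qed
  finally show ?thesis .
qed

definition "PR = (\<Sum>i\<in>{A<..N}. p i)"

lemma psi1_iff: "psi1 eta cI cA n N p t x \<longleftrightarrow> \<bar>T1 cI cA n N p t x\<bar> > cbar eta * sqrt (PR / real n)"
  unfolding psi1_def PR_def A_def ..

lemma psi2_iff: "psi2 cI cA n N p t x \<longleftrightarrow> (\<exists>j\<in>{A<..N}. cnt x {1..n} j \<ge> 2)"
  unfolding psi2_def A_def ..

lemma Ex_sq_nonneg: "in_cube N q \<Longrightarrow> Ex n N q (\<lambda>x. (g x)\<^sup>2) \<ge> 0"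
  using Ex_mono[of N q n "\<lambda>_. 0" "\<lambda>x. (g x)\<^sup>2"] by (simp add: Ex_const)

lemma typeI_psi1:
  assumes eta: "eta > 0"
  shows "Prob n N p (psi1 eta cI cA n N p t) \<le> eta / 16"
proof -
  have nn: "real n > 0" using n_pos by simp
  have PR0: "PR \<ge> 0" unfolding PR_def by (rule P_R_nonneg)
  have var: "Ex n N p (\<lambda>x. (T1 cI cA n N p t x - 0)\<^sup>2) \<le> PR / real n"
  proof -
    have "Ex n N p (\<lambda>x. (T1 cI cA n N p t x - 0)\<^sup>2) = (\<Sum>i\<in>{A<..N}. p i * (1 - p i) / n)"
      using T1_var[of p] by simp
    also have "\<dots> \<le> (\<Sum>i\<in>{A<..N}. p i / n)"
    proof (intro sum_mono divide_right_mono)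
      fix i assume i: "i \<in> {A<..N}"
      then have "0 \<le> p i" "p i \<le> 1/2" using prange[of i] by auto
      then show "p i * (1 - p i) \<le> p i" by (simp add: mult_left_le)
    qed simp
    also have "\<dots> = PR / real n" unfolding PR_def by (simp add: sum_divide_distrib)
    finally show ?thesis .
  qed
  show ?thesis
  proof (cases "PR = 0")
    case True
    have "Ex n N p (\<lambda>x. (T1 cI cA n N p t x - 0)\<^sup>2) = 0"
      using var True Ex_sq_nonneg[OF p_cube, where g="\<lambda>x. T1 cI cA n N p t x - 0"] by simp
    then have z: "Prob n N p (\<lambda>x. T1 cI cA n N p t x - 0 \<noteq> 0) = 0"
      by (rule prob_zero[OF p_cube])
    have "Prob n N p (psi1 eta cI cA n N p t) \<le> Prob n N p (\<lambda>x. T1 cI cA n N p t x - 0 \<noteq> 0)"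
      using p_cube by (intro Prob_mono) (auto simp: psi1_iff True)
    then show ?thesis using z eta by simp
  next
    case False
    then have PRp: "PR > 0" using PR0 by simp
    define \<theta> where "\<theta> = cbar eta * sqrt (PR / real n)"
    have th: "\<theta> > 0" unfolding \<theta>_def using PRp nn cbar_pos[OF eta] by simp
    have "Prob n N p (psi1 eta cI cA n N p t) \<le> Prob n N p (\<lambda>x. \<bar>T1 cI cA n N p t x - 0\<bar> \<ge> \<theta>)"
      using p_cube by (intro Prob_mono) (auto simp: psi1_iff \<theta>_def)
    also have "\<dots> \<le> Ex n N p (\<lambda>x. (T1 cI cA n N p t x - 0)\<^sup>2) / \<theta>\<^sup>2"
      by (rule cheb[OF p_cube th])
    also have "\<dots> \<le> (PR / real n) / \<theta>\<^sup>2" using var th by (intro divide_right_mono) auto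
    also have "\<theta>\<^sup>2 = (16 / eta) * (PR / real n)"
      unfolding \<theta>_def using PRp nn by (simp add: power_mult_distrib cbar_sq[OF eta])
    also have "(PR / real n) / ((16 / eta) * (PR / real n)) = eta / 16"
      using PRp nn eta by (simp add: field_simps)
    finally show ?thesis .
  qed
qed

definition "Zc x = (\<Sum>j\<in>{A<..N}. (real (cnt x {1..n} j))\<^sup>2 - real (cnt x {1..n} j))"

lemma nat_sq_minus: "(real c)\<^sup>2 - real c \<ge> 0" "c \<ge> 2 \<Longrightarrow> (real c)\<^sup>2 - real c \<ge> 2"
proof -
  have "real c * real c \<ge> real c" by (cases c) (auto simp: mult_le_cancel_right1)
  then show "(real c)\<^sup>2 - real c \<ge> 0" by (simp add: power2_eq_square)
  assume c: "c \<ge> 2"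
  have "real c * (real c - 1) \<ge> 2 * 1" using c by (intro mult_mono) auto
  then show "(real c)\<^sup>2 - real c \<ge> 2" by (simp add: power2_eq_square algebra_simps)
qed

lemma Zc_nonneg: "Zc x \<ge> 0" unfolding Zc_def using nat_sq_minus(1) by (intro sum_nonneg) auto

lemma Zc_ge2: "psi2 cI cA n N p t x \<Longrightarrow> Zc x \<ge> 2"
proof -
  assume "psi2 cI cA n N p t x"
  then obtain j where j: "j \<in> {A<..N}" "cnt x {1..n} j \<ge> 2" unfolding psi2_iff by auto
  have "2 \<le> (real (cnt x {1..n} j))\<^sup>2 - real (cnt x {1..n} j)" using nat_sq_minus(2)[OF j(2)] .
  also have "\<dots> \<le> Zc x" unfolding Zc_def using j(1) nat_sq_minus(1)
    by (intro member_le_sum) auto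
  finally show ?thesis .
qed

lemma Zc_mean: "Ex n N q Zc = (\<Sum>j\<in>{A<..N}. real n * (real n - 1) * (q j)\<^sup>2)"
proof -
  have "Ex n N q Zc = (\<Sum>j\<in>{A<..N}. Ex n N q (\<lambda>x. (real (cnt x {1..n} j))\<^sup>2) - Ex n N q (\<lambda>x. real (cnt x {1..n} j)))"
    unfolding Zc_def by (simp add: Ex_sum Ex_diff)
  also have "\<dots> = (\<Sum>j\<in>{A<..N}. real n * (real n - 1) * (q j)\<^sup>2)"
  proof (intro sum.cong refl)
    fix j assume j: "j \<in> {A<..N}"
    then have jN: "j \<in> {1..N}" by auto
    have H: "{1..n} \<subseteq> {1..n}" by simp
    show "Ex n N q (\<lambda>x. (real (cnt x {1..n} j))\<^sup>2) - Ex n N q (\<lambda>x. real (cnt x {1..n} j)) =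
      real n * (real n - 1) * (q j)\<^sup>2"
      by (simp only: Ex_cnt2[OF H jN] Ex_cnt[OF H jN]) simp
  qed
  finally show ?thesis .
qed

lemma typeI_psi2: "Prob n N p (psi2 cI cA n N p t) \<le> (cI + cA^4) / 2"
proof -
  have nn: "real n > 0" using n_pos by simp
  have "Prob n N p (psi2 cI cA n N p t) \<le> Prob n N p (\<lambda>x. Zc x \<ge> 2)"
    using p_cube Zc_ge2 by (intro Prob_mono) auto
  also have "\<dots> \<le> Ex n N p Zc / 2" using p_cube Zc_nonneg by (intro markov) auto
  also have "Ex n N p Zc \<le> (real n)\<^sup>2 * (\<Sum>j\<in>{A<..N}. (p j)\<^sup>2)"
  proof -
    have "Ex n N p Zc \<le> (\<Sum>j\<in>{A<..N}. (real n)\<^sup>2 * (p j)\<^sup>2)"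
      unfolding Zc_mean
    proof (intro sum_mono mult_right_mono)
      fix j show "real n * (real n - 1) \<le> (real n)\<^sup>2" using nn by (simp add: power2_eq_square)
    qed simp
    then show ?thesis by (simp add: sum_distrib_left)
  qed
  also have "(\<Sum>j\<in>{A<..N}. (p j)\<^sup>2) = (\<Sum>j\<in>{A<..I}. (p j)\<^sup>2) + (\<Sum>j\<in>{I<..N}. (p j)\<^sup>2)"
    unfolding split_R(1) by (rule sum.union_disjoint) (use split_R(2) in auto)
  also have "(real n)\<^sup>2 * ((\<Sum>j\<in>{A<..I}. (p j)\<^sup>2) + (\<Sum>j\<in>{I<..N}. (p j)\<^sup>2)) \<le> (real n)\<^sup>2 * (cA^4 / (real n)\<^sup>2 + cI / (real n)\<^sup>2)"
    using mid_sq tail_sq by (intro mult_left_mono add_mono) auto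
  also have "\<dots> = cA^4 + cI" using nn by (simp add: field_simps)
  finally show ?thesis by (simp add: divide_right_mono add.commute)
qed

lemma typeI:
  assumes eta: "eta > 0" and c: "cI \<le> eta / 8" "cA \<le> eta / 8"
  shows "Prob n N p (test eta cI cA n N p t) \<le> eta / 2"
proof -
  have "Prob n N p (test eta cI cA n N p t) \<le> Prob n N p (psi_bulk eta cI cA n N p t) + Prob n N p (\<lambda>x. psi1 eta cI cA n N p t x \<or> psi2 cI cA n N p t x)"
    unfolding test_def by (rule Prob_union[OF p_cube])
  also have "Prob n N p (\<lambda>x. psi1 eta cI cA n N p t x \<or> psi2 cI cA n N p t x) \<le> Prob n N p (psi1 eta cI cA n N p t) + Prob n N p (psi2 cI cA n N p t)"
    by (rule Prob_union[OF p_cube])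
  finally have "Prob n N p (test eta cI cA n N p t) \<le> eta/4 + (eta/16 + (cI + cA^4)/2)"
    using typeI_bulk[OF eta] typeI_psi1[OF eta] typeI_psi2 by linarith
  moreover have "cA^4 \<le> cA"
  proof -
    have "cA^4 = cA * cA^3" by (simp add: power_Suc[symmetric] numeral_eq_Suc)
    also have "\<dots> \<le> cA * 1" using cA by (intro mult_left_mono) (auto simp: power_le_one)
    finally show ?thesis by simp
  qed
  ultimately have "cI + cA^4 \<le> eta / 4" using c by linarith
  then have "eta/4 + (eta/16 + (cI + cA^4)/2) \<le> eta / 2" using eta by (simp add: field_simps)
  with \<open>Prob n N p (test eta cI cA n N p t) \<le> eta/4 + (eta/16 + (cI + cA^4)/2)\<close>
  show ?thesis by (rule order_trans)
qed

end


lemma var_term_bound: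
  fixes w p q k M sqS E :: real
  assumes k: "k > 0" and w: "w > 0" "w \<le> M" and p: "p \<ge> 0" and wp: "w * p \<le> sqS"
    and q: "0 \<le> q" "q \<le> 1" and wd: "w * (q - p)\<^sup>2 \<le> E"
  shows "w\<^sup>2 * ((q * (1 - q) / k + (q - p)\<^sup>2)\<^sup>2 - (q - p)^4) \<le>
     2 * (w\<^sup>2 * p\<^sup>2) / k\<^sup>2 + 2 * M * (w * (q - p)\<^sup>2) / k\<^sup>2 + 2 * sqS * (w * (q - p)\<^sup>2) / k
     + 2 * sqrt (M * E) * (w * (q - p)\<^sup>2) / k"
proof -
  define d where "d = q - p"
  define v where "v = q * (1 - q) / k"
  have v0: "v \<ge> 0" unfolding v_def using q k by simp
  have vle: "v \<le> (p + \<bar>d\<bar>) / k"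
  proof -
    have "q * (1 - q) \<le> q" using q by (simp add: mult_left_le)
    also have "q \<le> p + \<bar>d\<bar>" unfolding d_def by simp
    finally show ?thesis unfolding v_def using k by (simp add: divide_right_mono)
  qed
  have e1: "(v + d\<^sup>2)\<^sup>2 - d^4 = v\<^sup>2 + 2 * (v * d\<^sup>2)" by (simp add: power2_eq_square eval_nat_numeral algebra_simps)
  have v2: "v\<^sup>2 \<le> 2 * (p\<^sup>2 + d\<^sup>2) / k\<^sup>2"
  proof -
    have "v\<^sup>2 \<le> ((p + \<bar>d\<bar>) / k)\<^sup>2" using vle v0 by (intro power_mono) auto
    also have "\<dots> = (p + \<bar>d\<bar>)\<^sup>2 / k\<^sup>2" by (simp add: power_divide)
    also have "(p + \<bar>d\<bar>)\<^sup>2 \<le> 2 * (p\<^sup>2 + d\<^sup>2)"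
    proof -
      have "0 \<le> (p - \<bar>d\<bar>)\<^sup>2" by simp
      then show ?thesis by (simp add: power2_eq_square algebra_simps)
    qed
    then have "(p + \<bar>d\<bar>)\<^sup>2 / k\<^sup>2 \<le> 2 * (p\<^sup>2 + d\<^sup>2) / k\<^sup>2" using k by (intro divide_right_mono) auto
    finally show ?thesis .
  qed
  have vd: "2 * (v * d\<^sup>2) \<le> 2 * ((p + \<bar>d\<bar>) / k * d\<^sup>2)"
  proof -
    have "v * d\<^sup>2 \<le> ((p + \<bar>d\<bar>) / k) * d\<^sup>2" using vle by (intro mult_right_mono) auto
    then show ?thesis by linarith
  qed
  have "w\<^sup>2 * ((v + d\<^sup>2)\<^sup>2 - d^4) = w\<^sup>2 * v\<^sup>2 + w\<^sup>2 * (2 * (v * d\<^sup>2))" unfolding e1 by (simp add: algebra_simps)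
  also have "\<dots> \<le> w\<^sup>2 * (2 * (p\<^sup>2 + d\<^sup>2) / k\<^sup>2) + w\<^sup>2 * (2 * ((p + \<bar>d\<bar>) / k * d\<^sup>2))"
    using v2 vd by (intro add_mono mult_left_mono) auto
  also have "\<dots> = 2 * (w\<^sup>2 * p\<^sup>2) / k\<^sup>2 + 2 * w * (w * d\<^sup>2) / k\<^sup>2 + 2 * (w * p) * (w * d\<^sup>2) / k + 2 * (w * \<bar>d\<bar>) * (w * d\<^sup>2) / k"
    by (simp add: power2_eq_square algebra_simps add_divide_distrib)
  also have "\<dots> \<le> 2 * (w\<^sup>2 * p\<^sup>2) / k\<^sup>2 + 2 * M * (w * d\<^sup>2) / k\<^sup>2 + 2 * sqS * (w * d\<^sup>2) / k + 2 * sqrt (M * E) * (w * d\<^sup>2) / k"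
  proof -
    have wd0: "w * d\<^sup>2 \<ge> 0" using w by simp
    have a: "2 * w * (w * d\<^sup>2) / k\<^sup>2 \<le> 2 * M * (w * d\<^sup>2) / k\<^sup>2"
      using w wd0 k by (intro divide_right_mono mult_right_mono) auto
    have b: "2 * (w * p) * (w * d\<^sup>2) / k \<le> 2 * sqS * (w * d\<^sup>2) / k"
      using wp wd0 k by (intro divide_right_mono mult_right_mono) auto
    have wabs: "w * \<bar>d\<bar> \<le> sqrt (M * E)"
    proof -
      have "(w * \<bar>d\<bar>)\<^sup>2 = w * (w * d\<^sup>2)" by (simp add: power2_eq_square)
      also have "\<dots> \<le> M * E" using w wd wd0 unfolding d_def by (intro mult_mono) auto
      finally have "(w * \<bar>d\<bar>)\<^sup>2 \<le> M * E" .
      then have "sqrt ((w * \<bar>d\<bar>)\<^sup>2) \<le> sqrt (M * E)" by (rule real_sqrt_le_mono)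
      then show ?thesis using w by simp
    qed
    have c: "2 * (w * \<bar>d\<bar>) * (w * d\<^sup>2) / k \<le> 2 * sqrt (M * E) * (w * d\<^sup>2) / k"
      using wabs wd0 k by (intro divide_right_mono mult_right_mono) auto
    show ?thesis using a b c by linarith
  qed
  finally show ?thesis unfolding d_def v_def .
qed


context setting begin

definition "Eb q = (\<Sum>i\<in>{1..A}. w i * (q i - p i)\<^sup>2)"

lemma bulk_var_bound:
  assumes q: "in_cube N q" and A1: "A \<ge> 1"
  shows "Ex n N q (\<lambda>x. (T_bulk cI cA n N p t x - Eb q)\<^sup>2) \<le>
    2 * S / (real k)\<^sup>2 + 2 * (real n * sqrt S / cA\<^sup>2) * Eb q / (real k)\<^sup>2 + 2 * sqrt S * Eb q / real k
    + 2 * sqrt ((real n * sqrt S / cA\<^sup>2) * Eb q) * Eb q / real k"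
proof -
  define M where "M = real n * sqrt S / cA\<^sup>2"
  define E where "E = Eb q"
  have kp: "real k > 0" using nk by simp
  have Enn: "\<And>i. i \<in> {1..A} \<Longrightarrow> w i * (q i - p i)\<^sup>2 \<ge> 0"
  proof -
    fix i assume "i \<in> {1..A}" then have "i \<in> {1..I}" using A_le by auto
    then show "w i * (q i - p i)\<^sup>2 \<ge> 0" using w_pos p_pos by simp
  qed
  have "Ex n N q (\<lambda>x. (T_bulk cI cA n N p t x - Eb q)\<^sup>2) =
    (\<Sum>i\<in>{1..A}. (w i)\<^sup>2 * ((q i * (1 - q i) / k + (q i - p i)\<^sup>2)\<^sup>2 - (q i - p i)^4))"
    unfolding Eb_def by (rule bulk_var)
  also have "\<dots> \<le> (\<Sum>i\<in>{1..A}. 2 * ((w i)\<^sup>2 * (p i)\<^sup>2) / (real k)\<^sup>2 + 2 * M * (w i * (q i - p i)\<^sup>2) / (real k)\<^sup>2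
      + 2 * sqrt S * (w i * (q i - p i)\<^sup>2) / real k + 2 * sqrt (M * E) * (w i * (q i - p i)\<^sup>2) / real k)"
  proof (intro sum_mono var_term_bound)
    fix i assume i: "i \<in> {1..A}"
    then have iI: "i \<in> {1..I}" using A_le by auto
    have iN: "i \<in> {1..N}" using iI I_le by auto
    show "real k > 0" by (rule kp)
    show "w i > 0" using w_pos[OF iI] p_pos[OF iI] by simp
    show "w i \<le> M" unfolding M_def using bw1[OF i] w_pos[OF iI] by simp
    show "p i \<ge> 0" using p_pos[OF iI] by simp
    show "w i * p i \<le> sqrt S" using bw3[OF iI] w_pos[OF iI] by simp
    show "0 \<le> q i" "q i \<le> 1" using q iN unfolding in_cube_def by auto
    show "w i * (q i - p i)\<^sup>2 \<le> E" unfolding E_def Eb_def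
      using i Enn by (intro member_le_sum) auto
  qed
  also have "\<dots> = 2 * (\<Sum>i\<in>{1..A}. (w i)\<^sup>2 * (p i)\<^sup>2) / (real k)\<^sup>2 + 2 * M * E / (real k)\<^sup>2 + 2 * sqrt S * E / real k
      + 2 * sqrt (M * E) * E / real k"
    unfolding E_def Eb_def by (simp add: sum.distrib sum_distrib_left sum_divide_distrib)
  also have "(\<Sum>i\<in>{1..A}. (w i)\<^sup>2 * (p i)\<^sup>2) = SA"
    unfolding SA_def using A_le by (intro sum.cong refl) (auto simp: bw2 w_pos)
  also have "2 * SA / (real k)\<^sup>2 \<le> 2 * S / (real k)\<^sup>2" using SA_le_S kp by (intro divide_right_mono) auto
  finally show ?thesis unfolding M_def E_def by simp
qed

lemma typeII_bulk_core:
  assumes eta: "eta > 0" and q: "in_cube N q" and A1: "A \<ge> 1"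
    and C2: "C \<ge> 2" and Cc: "C\<^sup>2 \<ge> 8 * cbar eta" and Ce: "C * (eta * cA\<^sup>2) \<ge> 384"
    and Elb: "Eb q \<ge> C\<^sup>2 * sqrt S / (4 * real n)"
  shows "Prob n N q (\<lambda>x. \<not> psi_bulk eta cI cA n N p t x) \<le> eta / 2"
proof -
  define E where "E = Eb q"
  have AI: "A \<in> {1..I}" using A_cond[OF A1] by auto
  have Sp: "S > 0" using S_pos AI by auto
  have nn: "real n > 0" "real k > 0" using n_pos nk by auto
  have nk2: "real n = 2 * real k" using nk by simp
  define g where "g = sqrt S / real n"
  have gp: "g > 0" unfolding g_def using Sp nn by simp
  have Cp: "C > 0" using C2 by simp
  have Eg: "E \<ge> C\<^sup>2 * g / 4" using Elb unfolding E_def g_def by simp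
  have Ep: "E > 0" using Eg gp Cp by (smt (verit) divide_pos_pos mult_pos_pos zero_less_power)
  define u where "u = g / E"
  have up: "u > 0" unfolding u_def using gp Ep by simp
  have u_le: "u \<le> 4 / C\<^sup>2" unfolding u_def using Eg Ep Cp by (simp add: divide_simps mult.commute)
  have u_le2: "u \<le> 2 / C"
  proof -
    have "4 / C\<^sup>2 \<le> 2 / C" using C2 by (simp add: divide_simps power2_eq_square)
    then show ?thesis using u_le by simp
  qed
  have u_le1: "u \<le> 1"
  proof -
    have "u * C \<le> 2" using u_le2 C2 by (simp add: divide_simps)
    moreover have "u * 2 \<le> u * C" using up C2 by (intro mult_left_mono) auto
    ultimately show ?thesis by linarith
  qed
  have su: "sqrt u \<le> 2 / C"
  proof -
    have "sqrt u \<le> sqrt (4 / C\<^sup>2)" using u_le by (rule real_sqrt_le_mono)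
    also have "sqrt (4 / C\<^sup>2) = 2 / C" using Cp by (simp add: real_sqrt_divide)
    finally show ?thesis .
  qed
  have cA2: "cA\<^sup>2 \<le> 1" "cA\<^sup>2 \<le> cA" "cA\<^sup>2 > 0" using cA by (auto simp: power2_eq_square mult_le_one mult_left_le)
  have V: "Ex n N q (\<lambda>x. (T_bulk cI cA n N p t x - E)\<^sup>2) \<le> E\<^sup>2 * (8 * u\<^sup>2 + 8 * u / cA\<^sup>2 + 4 * u + 4 * sqrt u / cA)"
  proof -
    have "Ex n N q (\<lambda>x. (T_bulk cI cA n N p t x - E)\<^sup>2) \<le>
      2 * S / (real k)\<^sup>2 + 2 * (real n * sqrt S / cA\<^sup>2) * E / (real k)\<^sup>2 + 2 * sqrt S * E / real k
      + 2 * sqrt ((real n * sqrt S / cA\<^sup>2) * E) * E / real k"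
      unfolding E_def by (rule bulk_var_bound[OF q A1])
    also have "2 * S / (real k)\<^sup>2 = E\<^sup>2 * (8 * u\<^sup>2)"
    proof -
      have "S = (g * real n)\<^sup>2" unfolding g_def using Sp nn by simp
      then show ?thesis unfolding u_def using Ep nn nk2 by (simp add: field_simps power2_eq_square)
    qed
    also have "2 * (real n * sqrt S / cA\<^sup>2) * E / (real k)\<^sup>2 = E\<^sup>2 * (8 * u / cA\<^sup>2)"
    proof -
      have "sqrt S = g * real n" unfolding g_def using nn by simp
      then show ?thesis unfolding u_def using Ep nn nk2 cA2 by (simp add: field_simps power2_eq_square)
    qed
    also have "2 * sqrt S * E / real k = E\<^sup>2 * (4 * u)"
    proof -
      have "sqrt S = g * real n" unfolding g_def using nn by simp
      then show ?thesis unfolding u_def using Ep nn nk2 by (simp add: field_simps power2_eq_square)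
    qed
    also have "2 * sqrt ((real n * sqrt S / cA\<^sup>2) * E) * E / real k = E\<^sup>2 * (4 * sqrt u / cA)"
    proof -
      have "(real n * sqrt S / cA\<^sup>2) * E = (real n / cA)\<^sup>2 * (u * E\<^sup>2)"
        unfolding u_def g_def using Ep nn cA2 by (simp add: field_simps power2_eq_square)
      then have "sqrt ((real n * sqrt S / cA\<^sup>2) * E) = real n / cA * (sqrt u * E)"
        using Ep nn cA up by (simp add: real_sqrt_mult)
      then show ?thesis using Ep nn nk2 cA by (simp add: field_simps power2_eq_square)
    qed
    finally show ?thesis by (simp add: algebra_simps)
  qed
  have V2: "8 * u\<^sup>2 + 8 * u / cA\<^sup>2 + 4 * u + 4 * sqrt u / cA \<le> 48 / (C * cA\<^sup>2)"
  proof -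
    have a: "8 * u\<^sup>2 \<le> 16 / (C * cA\<^sup>2)"
    proof -
      have "u\<^sup>2 \<le> u * 1" using up u_le1 by (simp add: power2_eq_square mult_left_mono)
      then have "8 * u\<^sup>2 \<le> 8 * (2 / C)" using u_le2 by linarith
      also have "\<dots> \<le> 16 / (C * cA\<^sup>2)" using Cp cA2 by (simp add: divide_simps)
      finally show ?thesis .
    qed
    have b: "8 * u / cA\<^sup>2 \<le> 16 / (C * cA\<^sup>2)"
      using u_le2 cA2 Cp by (simp add: divide_simps mult.commute)
    have c: "4 * u \<le> 8 / (C * cA\<^sup>2)"
    proof -
      have "4 * u \<le> 4 * (2 / C)" using u_le2 by linarith
      also have "\<dots> \<le> 8 / (C * cA\<^sup>2)" using Cp cA2 by (simp add: divide_simps)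
      finally show ?thesis .
    qed
    have d: "4 * sqrt u / cA \<le> 8 / (C * cA\<^sup>2)"
    proof -
      have "4 * sqrt u / cA \<le> 4 * (2 / C) / cA" using su cA by (intro divide_right_mono) auto
      also have "\<dots> \<le> 8 / (C * cA\<^sup>2)" using Cp cA2 cA by (simp add: divide_simps power2_eq_square)
      finally show ?thesis .
    qed
    have "16 / (C * cA\<^sup>2) + 16 / (C * cA\<^sup>2) + 8 / (C * cA\<^sup>2) + 8 / (C * cA\<^sup>2) = 48 / (C * cA\<^sup>2)"
      by (simp add: add_divide_distrib[symmetric])
    then show ?thesis using a b c d by linarith
  qed
  have thr: "cbar eta / real n * sqrt SA \<le> E / 2"
  proof -
    have "cbar eta / real n * sqrt SA \<le> cbar eta / real n * sqrt S"
      using SA_le_S cbar_pos[OF eta] nn by (intro mult_left_mono) auto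
    also have "\<dots> = cbar eta * g" unfolding g_def by simp
    also have "\<dots> \<le> cbar eta * (4 * E / C\<^sup>2)"
      using u_le cbar_pos[OF eta] Ep Cp unfolding u_def by (intro mult_left_mono) (auto simp: divide_simps mult.commute)
    also have "\<dots> \<le> E / 2"
    proof -
      have "cbar eta * (4 * E / C\<^sup>2) = (8 * cbar eta) * E / (2 * C\<^sup>2)" by (simp add: field_simps)
      also have "\<dots> \<le> C\<^sup>2 * E / (2 * C\<^sup>2)" using Cc Ep Cp by (intro divide_right_mono mult_right_mono) auto
      also have "\<dots> = E / 2" using Cp by simp
      finally show ?thesis .
    qed
    finally show ?thesis .
  qed
  have "Prob n N q (\<lambda>x. \<not> psi_bulk eta cI cA n N p t x) \<le> Prob n N q (\<lambda>x. \<bar>T_bulk cI cA n N p t x - E\<bar> \<ge> E / 2)"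
  proof (intro Prob_mono[OF q])
    fix x assume "\<not> psi_bulk eta cI cA n N p t x"
    then have "T_bulk cI cA n N p t x \<le> cbar eta / real n * sqrt SA" by (simp add: psi_bulk_iff not_less)
    then have "E - T_bulk cI cA n N p t x \<ge> E / 2" using thr by linarith
    moreover have "\<bar>T_bulk cI cA n N p t x - E\<bar> \<ge> E - T_bulk cI cA n N p t x" by linarith
    ultimately show "\<bar>T_bulk cI cA n N p t x - E\<bar> \<ge> E / 2" by linarith
  qed
  also have "\<dots> \<le> Ex n N q (\<lambda>x. (T_bulk cI cA n N p t x - E)\<^sup>2) / (E / 2)\<^sup>2"
    using Ep by (intro cheb[OF q]) auto
  also have "\<dots> \<le> (E\<^sup>2 * (48 / (C * cA\<^sup>2))) / (E / 2)\<^sup>2"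
  proof (rule divide_right_mono)
    have "E\<^sup>2 * (8 * u\<^sup>2 + 8 * u / cA\<^sup>2 + 4 * u + 4 * sqrt u / cA) \<le> E\<^sup>2 * (48 / (C * cA\<^sup>2))"
      using V2 by (intro mult_left_mono) auto
    then show "Ex n N q (\<lambda>x. (T_bulk cI cA n N p t x - E)\<^sup>2) \<le> E\<^sup>2 * (48 / (C * cA\<^sup>2))"
      using V by linarith
  qed simp
  also have "\<dots> = 192 / (C * cA\<^sup>2)" using Ep by (simp add: field_simps power2_eq_square)
  also have "\<dots> \<le> eta / 2"
    using Ce Cp cA2 eta by (simp add: divide_simps mult.commute mult.left_commute)
  finally show ?thesis .
qed

end


lemma abs_sq_powr: "(x::real) \<noteq> 0 \<Longrightarrow> (x\<^sup>2) powr (s/2) = \<bar>x\<bar> powr s"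
proof -
  assume x: "x \<noteq> 0"
  then have ax: "\<bar>x\<bar> > 0" by simp
  have "x\<^sup>2 = \<bar>x\<bar>\<^sup>2" by simp
  then have "(x\<^sup>2) powr (s/2) = (\<bar>x\<bar>\<^sup>2) powr (s/2)" by simp
  also have "\<dots> = \<bar>x\<bar> powr (real 2 * (s/2))" by (rule pow_powr[OF ax])
  finally show ?thesis by simp
qed

context setting begin

lemma Eb_nonneg: "Eb q \<ge> 0"
  unfolding Eb_def
proof (intro sum_nonneg)
  fix i assume "i \<in> {1..A}" then have "i \<in> {1..I}" using A_le by auto
  then show "w i * (q i - p i)\<^sup>2 \<ge> 0" using w_pos p_pos by simp
qed

lemma holder_bulk: "(\<Sum>i\<in>{1..A}. \<bar>q i - p i\<bar> powr t) \<le> Eb q powr (t/2) * SA powr ((2-t)/2)"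
proof -
  have "(\<Sum>i\<in>{1..A}. \<bar>q i - p i\<bar> powr t) = (\<Sum>i\<in>{1..A}. (w i * (q i - p i)\<^sup>2) powr (t/2) * (p i powr r) powr ((2-t)/2))"
  proof (intro sum.cong refl)
    fix i assume i: "i \<in> {1..A}"
    then have iI: "i \<in> {1..I}" using A_le by auto
    have pi: "p i > 0" using p_pos[OF iI] .
    show "\<bar>q i - p i\<bar> powr t = (w i * (q i - p i)\<^sup>2) powr (t/2) * (p i powr r) powr ((2-t)/2)"
    proof (cases "q i - p i = 0")
      case True then show ?thesis by simp
    next
      case False
      have "(w i * (q i - p i)\<^sup>2) powr (t/2) = w i powr (t/2) * ((q i - p i)\<^sup>2) powr (t/2)"
        by (rule powr_mult)
      also have "w i powr (t/2) = p i powr (-b * (t/2))" using w_pos[OF iI] by (simp add: powr_powr)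
      also have "((q i - p i)\<^sup>2) powr (t/2) = \<bar>q i - p i\<bar> powr t" by (rule abs_sq_powr[OF False])
      finally have a: "(w i * (q i - p i)\<^sup>2) powr (t/2) = p i powr (-b * (t/2)) * \<bar>q i - p i\<bar> powr t" .
      have b: "(p i powr r) powr ((2-t)/2) = p i powr (b * (t/2))"
      proof -
        have "(p i powr r) powr ((2-t)/2) = p i powr (r * ((2-t)/2))" by (simp add: powr_powr)
        also have "r * ((2-t)/2) = b * (t/2)" using rbt by (simp add: algebra_simps)
        finally show ?thesis .
      qed
      have "p i powr (-b * (t/2)) * p i powr (b * (t/2)) = 1" using pi by (simp add: powr_add[symmetric])
      then show ?thesis unfolding a b by (simp add: algebra_simps)
    qed
  qed
  also have "\<dots> \<le> (\<Sum>i\<in>{1..A}. w i * (q i - p i)\<^sup>2) powr (t/2) * (\<Sum>i\<in>{1..A}. p i powr r) powr ((2-t)/2)"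
  proof (rule holder_sum)
    show "finite {1..A}" by simp
    show "0 \<le> t/2" "0 \<le> (2-t)/2" using t by auto
    show "t/2 + (2-t)/2 = 1" by (simp add: add_divide_distrib[symmetric])
    fix i assume i: "i \<in> {1..A}"
    then have iI: "i \<in> {1..I}" using A_le by auto
    show "0 \<le> w i * (q i - p i)\<^sup>2" using w_pos[OF iI] by simp
    show "0 \<le> p i powr r" by simp
  qed
  finally show ?thesis unfolding Eb_def SA_def .
qed

lemma bulk_E_lb:
  assumes Cp: "C > 0" and A1: "A \<ge> 1"
    and SigB: "(\<Sum>i\<in>{1..A}. \<bar>q i - p i\<bar> powr t) \<ge> (C * Rt) powr t / 2"
  shows "Eb q \<ge> C\<^sup>2 * sqrt S / (4 * real n)"
proof -
  define E where "E = Eb q"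
  define X where "X = (\<Sum>i\<in>{1..A}. \<bar>q i - p i\<bar> powr t)"
  have E0: "E \<ge> 0" unfolding E_def by (rule Eb_nonneg)
  have AI: "A \<in> {1..I}" using A_cond[OF A1] by auto
  have Sp: "S > 0" using S_pos AI by auto
  have SAp: "SA > 0" using SA_pos[OF A1] .
  have nn: "real n > 0" using n_pos by simp
  have tp: "t > 0" using t by simp
  have CR: "C * Rt > 0" using Cp Rt_pos by simp
  have X0: "X \<ge> 0" unfolding X_def by (intro sum_nonneg) auto
  have "X powr (2/t) \<le> (E powr (t/2) * SA powr ((2-t)/2)) powr (2/t)"
    using holder_bulk X0 t unfolding X_def E_def by (intro powr_mono2) auto
  also have "\<dots> = E * SA powr ((2-t)/t)"
  proof -
    have "(E powr (t/2) * SA powr ((2-t)/2)) powr (2/t) = (E powr (t/2)) powr (2/t) * (SA powr ((2-t)/2)) powr (2/t)"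
      by (rule powr_mult)
    also have "(E powr (t/2)) powr (2/t) = E powr 1" using tp by (simp add: powr_powr)
    also have "E powr 1 = E" using E0 by simp
    also have "(SA powr ((2-t)/2)) powr (2/t) = SA powr ((2-t)/t)"
    proof -
      have "(2-t)/2 * (2/t) = (2-t)/t" using tp by (simp add: field_simps)
      then show ?thesis by (simp add: powr_powr)
    qed
    finally show ?thesis .
  qed
  also have "\<dots> \<le> E * S powr ((2-t)/t)"
    using SA_le_S SAp t E0 by (intro mult_left_mono powr_mono2) auto
  finally have up: "X powr (2/t) \<le> E * S powr ((2-t)/t)" .
  have "X powr (2/t) \<ge> ((C * Rt) powr t / 2) powr (2/t)"
    using SigB CR t unfolding X_def by (intro powr_mono2) auto
  moreover have "((C * Rt) powr t / 2) powr (2/t) = (C * Rt)\<^sup>2 / 2 powr (2/t)"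
  proof -
    have "((C * Rt) powr t / 2) powr (2/t) = ((C * Rt) powr t) powr (2/t) / 2 powr (2/t)"
      by (rule powr_divide)
    also have "((C * Rt) powr t) powr (2/t) = (C * Rt) powr 2" using tp by (simp add: powr_powr)
    also have "(C * Rt) powr 2 = (C * Rt)\<^sup>2" using CR by (simp add: powr_numeral)
    finally show ?thesis .
  qed
  moreover have "2 powr (2/t) \<le> 4"
  proof -
    have "2 powr (2/t) \<le> 2 powr 2" using t by (intro powr_mono) (auto simp: divide_simps)
    then show ?thesis by (simp add: powr_numeral)
  qed
  moreover have "(C * Rt)\<^sup>2 \<ge> C\<^sup>2 * (S powr (1/r) / real n)"
  proof -
    have "(C * Rt)\<^sup>2 \<ge> (C * rho1)\<^sup>2" using Rt_ge rho1_nonneg Cp by (intro power_mono mult_left_mono) auto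
    also have "(C * rho1)\<^sup>2 = C\<^sup>2 * (S powr (1/r) / real n)"
      unfolding rho1_def using S_nonneg nn by (simp add: power_mult_distrib)
    finally show ?thesis .
  qed
  ultimately have low: "X powr (2/t) \<ge> C\<^sup>2 * (S powr (1/r) / real n) / 4"
  proof -
    assume a: "X powr (2/t) \<ge> ((C * Rt) powr t / 2) powr (2/t)"
      and b: "((C * Rt) powr t / 2) powr (2/t) = (C * Rt)\<^sup>2 / 2 powr (2/t)"
      and c: "2 powr (2/t) \<le> 4" and d: "(C * Rt)\<^sup>2 \<ge> C\<^sup>2 * (S powr (1/r) / real n)"
    have "C\<^sup>2 * (S powr (1/r) / real n) / 4 \<le> (C * Rt)\<^sup>2 / 4" using d by simp
    also have "\<dots> \<le> (C * Rt)\<^sup>2 / 2 powr (2/t)" using c by (intro divide_left_mono) auto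
    finally show ?thesis using a b by simp
  qed
  have key: "C\<^sup>2 * (S powr (1/r) / real n) / 4 \<le> E * S powr ((2-t)/t)" using low up by linarith
  have Spow: "S powr (1/r) = sqrt S * S powr ((2-t)/t)"
  proof -
    have "1/r = 1/2 + (2-t)/t" using rt2 by linarith
    then have "S powr (1/r) = S powr (1/2 + (2-t)/t)" by simp
    also have "\<dots> = S powr (1/2) * S powr ((2-t)/t)" by (simp add: powr_add)
    finally show ?thesis using Sp by (simp add: powr_half_sqrt)
  qed
  have Sq: "S powr ((2-t)/t) > 0" using Sp by simp
  have "C\<^sup>2 * sqrt S / (4 * real n) * S powr ((2-t)/t) = C\<^sup>2 * (S powr (1/r) / real n) / 4"
    unfolding Spow by (simp add: field_simps)
  then have "C\<^sup>2 * sqrt S / (4 * real n) * S powr ((2-t)/t) \<le> E * S powr ((2-t)/t)" using key by simp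
  then show ?thesis unfolding E_def using Sq by (rule mult_right_le_imp_le)
qed

end


context setting begin

lemma cnt_split: "cnt x {1..n} j = cnt x {1..k} j + cnt x {k+1..n} j"
proof -
  have "{l\<in>{1..n}. x l j} = {l\<in>{1..k}. x l j} \<union> {l\<in>{k+1..n}. x l j}" using nk by auto
  moreover have "{l\<in>{1..k}. x l j} \<inter> {l\<in>{k+1..n}. x l j} = {}" by auto
  ultimately show ?thesis unfolding cnt_def by (simp add: card_Un_disjoint)
qed

lemma R_sub: "{A<..N} \<subseteq> {1..N}" by auto

definition "Zp x = (\<Sum>j\<in>{A<..N}. (real k)\<^sup>2 * Uv {1..k} 0 j x * Uv {k+1..n} 0 j x)"
definition "mu q = (\<Sum>j\<in>{A<..N}. (real k)\<^sup>2 * (q j)\<^sup>2)"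

lemma Zp_zero: "\<not> psi2 cI cA n N p t x \<Longrightarrow> Zp x = 0"
proof -
  assume "\<not> psi2 cI cA n N p t x"
  then have lt: "\<forall>j\<in>{A<..N}. cnt x {1..n} j < 2" unfolding psi2_iff by auto
  have kp: "real k > 0" using nk by simp
  show "Zp x = 0" unfolding Zp_def
  proof (intro sum.neutral ballI)
    fix j assume j: "j \<in> {A<..N}"
    have "cnt x {1..k} j + cnt x {k+1..n} j < 2" using lt j cnt_split by auto
    then have "cnt x {1..k} j = 0 \<or> cnt x {k+1..n} j = 0" by auto
    then show "(real k)\<^sup>2 * Uv {1..k} 0 j x * Uv {k+1..n} 0 j x = 0"
      unfolding Uv_def by auto
  qed
qed

lemma Zp_mean: "Ex n N q Zp = mu q"
  unfolding Zp_def mu_def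
  using halfprod(1)[OF nk R_sub, where w="\<lambda>_. (real k)\<^sup>2" and c="\<lambda>_. 0" and q=q] by simp

lemma Zp_var: "Ex n N q (\<lambda>x. (Zp x - mu q)\<^sup>2) =
  (\<Sum>j\<in>{A<..N}. ((real k)\<^sup>2)\<^sup>2 * ((q j * (1 - q j) / k + (q j)\<^sup>2)\<^sup>2 - (q j)^4))"
  unfolding Zp_def mu_def
  using halfprod(2)[OF nk R_sub, where w="\<lambda>_. (real k)\<^sup>2" and c="\<lambda>_. 0" and q=q] by simp

lemma collide:
  assumes eta: "eta > 0" "eta < 1" and q: "in_cube N q" and mu: "mu q \<ge> 36 / eta\<^sup>2"
  shows "Prob n N q (\<lambda>x. \<not> psi2 cI cA n N p t x) \<le> eta / 2"
proof -
  define m where "m = mu q"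
  have kp: "real k > 0" using nk by simp
  have mp: "m > 0" unfolding m_def using mu eta by (smt (verit) divide_pos_pos zero_less_power)
  have qj: "\<And>j. j \<in> {A<..N} \<Longrightarrow> 0 \<le> q j \<and> q j \<le> 1" using q unfolding in_cube_def by auto
  have kq: "real k * q j \<le> sqrt m" if j: "j \<in> {A<..N}" for j
  proof -
    have "(real k)\<^sup>2 * (q j)\<^sup>2 \<le> m" unfolding m_def mu_def using j
      by (intro member_le_sum) auto
    then have "sqrt ((real k * q j)\<^sup>2) \<le> sqrt m" by (simp add: power_mult_distrib)
    then show ?thesis using qj[OF j] kp by simp
  qed
  have V: "Ex n N q (\<lambda>x. (Zp x - m)\<^sup>2) \<le> m + 2 * sqrt m * m"
  proof -
    have "Ex n N q (\<lambda>x. (Zp x - m)\<^sup>2) = (\<Sum>j\<in>{A<..N}. ((real k)\<^sup>2)\<^sup>2 * ((q j * (1 - q j) / k + (q j)\<^sup>2)\<^sup>2 - (q j)^4))"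
      unfolding m_def by (rule Zp_var)
    also have "\<dots> \<le> (\<Sum>j\<in>{A<..N}. (real k)\<^sup>2 * (q j)\<^sup>2 + 2 * sqrt m * ((real k)\<^sup>2 * (q j)\<^sup>2))"
    proof (intro sum_mono)
      fix j assume j: "j \<in> {A<..N}"
      define v where "v = q j * (1 - q j) / k"
      have v0: "0 \<le> v" unfolding v_def using qj[OF j] kp by simp
      have vle: "v \<le> q j / k" unfolding v_def using qj[OF j] kp by (intro divide_right_mono) (auto simp: mult_left_le)
      have "((real k)\<^sup>2)\<^sup>2 * ((v + (q j)\<^sup>2)\<^sup>2 - (q j)^4) = ((real k)\<^sup>2)\<^sup>2 * v\<^sup>2 + 2 * (((real k)\<^sup>2)\<^sup>2 * v * (q j)\<^sup>2)"
        by (simp add: power2_eq_square eval_nat_numeral algebra_simps)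
      also have "((real k)\<^sup>2)\<^sup>2 * v\<^sup>2 \<le> ((real k)\<^sup>2)\<^sup>2 * (q j / k)\<^sup>2"
        using v0 vle by (intro mult_left_mono power_mono) auto
      also have "((real k)\<^sup>2)\<^sup>2 * (q j / k)\<^sup>2 = (real k)\<^sup>2 * (q j)\<^sup>2" using kp by (simp add: field_simps power2_eq_square)
      also have "((real k)\<^sup>2)\<^sup>2 * v * (q j)\<^sup>2 \<le> ((real k)\<^sup>2)\<^sup>2 * (q j / k) * (q j)\<^sup>2"
        using vle by (intro mult_right_mono mult_left_mono) auto
      also have "((real k)\<^sup>2)\<^sup>2 * (q j / k) * (q j)\<^sup>2 = (real k * q j) * ((real k)\<^sup>2 * (q j)\<^sup>2)"
        using kp by (simp add: field_simps power2_eq_square)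
      also have "\<dots> \<le> sqrt m * ((real k)\<^sup>2 * (q j)\<^sup>2)" using kq[OF j] by (intro mult_right_mono) auto
      finally show "((real k)\<^sup>2)\<^sup>2 * ((q j * (1 - q j) / k + (q j)\<^sup>2)\<^sup>2 - (q j)^4) \<le>
          (real k)\<^sup>2 * (q j)\<^sup>2 + 2 * sqrt m * ((real k)\<^sup>2 * (q j)\<^sup>2)" unfolding v_def by simp
    qed
    also have "\<dots> = m + 2 * sqrt m * m" unfolding m_def mu_def by (simp add: sum.distrib sum_distrib_left)
    finally show ?thesis .
  qed
  have "Prob n N q (\<lambda>x. \<not> psi2 cI cA n N p t x) \<le> Prob n N q (\<lambda>x. \<bar>Zp x - m\<bar> \<ge> m)"
    using q by (intro Prob_mono) (auto simp: Zp_zero mp less_imp_le)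
  also have "\<dots> \<le> Ex n N q (\<lambda>x. (Zp x - m)\<^sup>2) / m\<^sup>2" by (rule cheb[OF q mp])
  also have "\<dots> \<le> (m + 2 * sqrt m * m) / m\<^sup>2" using V mp by (intro divide_right_mono) auto
  also have "\<dots> = 1 / m + 2 / sqrt m"
    using mp by (simp add: field_simps power2_eq_square)
  also have "\<dots> \<le> eta / 2"
  proof -
    have sm: "sqrt m \<ge> 6 / eta"
    proof -
      have "sqrt m \<ge> sqrt (36 / eta\<^sup>2)" using mu unfolding m_def by (rule real_sqrt_le_mono)
      also have "sqrt (36 / eta\<^sup>2) = 6 / eta" using eta by (simp add: real_sqrt_divide)
      finally show ?thesis .
    qed
    have a: "2 / sqrt m \<le> eta / 3"
    proof -
      have pos: "0 < sqrt m * (6 / eta)" using mp eta by simp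
      have "2 / sqrt m \<le> 2 / (6 / eta)" by (rule divide_left_mono[OF sm _ pos]) simp
      then show ?thesis using eta by simp
    qed
    have b: "1 / m \<le> eta / 36"
    proof -
      have pos: "0 < m * (36 / eta\<^sup>2)" using mp eta by simp
      have "1 / m \<le> 1 / (36 / eta\<^sup>2)" by (rule divide_left_mono[OF mu[folded m_def] _ pos]) simp
      also have "\<dots> = eta\<^sup>2 / 36" by simp
      also have "\<dots> \<le> eta / 36" using eta by (simp add: power2_eq_square mult_left_le)
      finally show ?thesis .
    qed
    show ?thesis using a b eta by linarith
  qed
  finally show ?thesis .
qed

end


lemma sqrt_amgm: "a \<ge> 0 \<Longrightarrow> b \<ge> 0 \<Longrightarrow> sqrt (a * b) \<le> (a + b) / 2"
proof -
  assume a: "a \<ge> 0" and b: "b \<ge> 0"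
  have "a * b \<le> ((a + b) / 2)\<^sup>2"
  proof -
    have "0 \<le> (a - b)\<^sup>2" by simp
    then show ?thesis by (simp add: power2_eq_square field_simps)
  qed
  then have "sqrt (a * b) \<le> sqrt (((a + b) / 2)\<^sup>2)" by (rule real_sqrt_le_mono)
  then show ?thesis using a b by simp
qed

context setting begin

definition "Rp q = {i\<in>{A<..N}. q i > p i}"
definition "Rm q = {i\<in>{A<..N}. \<not> q i > p i}"
definition "Dp1 q = (\<Sum>i\<in>Rp q. q i - p i)"

lemma R_part: "{A<..N} = Rp q \<union> Rm q" "Rp q \<inter> Rm q = {}" "finite (Rp q)" "finite (Rm q)"
  unfolding Rp_def Rm_def by auto

lemma sum_R_split: "(\<Sum>i\<in>{A<..N}. f i) = (\<Sum>i\<in>Rp q. f i) + (\<Sum>i\<in>Rm q. f i)"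
  by (subst R_part(1)[of q]) (rule sum.union_disjoint; use R_part in auto)

lemma PR_nonneg: "PR \<ge> 0" unfolding PR_def by (rule P_R_nonneg)

lemma psi1_detect:
  assumes eta: "eta > 0" "eta < 1" and q: "in_cube N q" and L1: "L \<ge> 64 / eta" and L2: "L \<ge> 2 * cbar eta"
    and Dp: "Dp1 q \<ge> L * (PR + 1 / real n)"
  shows "Prob n N q (\<lambda>x. \<not> psi1 eta cI cA n N p t x) \<le> eta / 2"
proof -
  define D where "D = Dp1 q"
  define m where "m = (\<Sum>i\<in>{A<..N}. q i - p i)"
  have nn: "real n > 0" using n_pos by simp
  have qj: "\<And>j. j \<in> {A<..N} \<Longrightarrow> 0 \<le> q j \<and> q j \<le> 1" using q unfolding in_cube_def by auto
  have pj: "\<And>j. j \<in> {A<..N} \<Longrightarrow> 0 \<le> p j" using p_nonneg by auto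
  have cb: "cbar eta > 0" using cbar_pos[OF eta(1)] .
  have Lge: "L \<ge> 64"
  proof -
    have "64 / eta \<ge> 64" using eta by (simp add: divide_simps)
    then show ?thesis using L1 by linarith
  qed
  have PR0: "PR \<ge> 0" by (rule PR_nonneg)
  have Dpos: "D \<ge> L * (PR + 1 / real n)" unfolding D_def by (rule Dp)
  have "1 / real n > 0" using nn by simp
  then have "PR + 1 / real n > 0" using PR0 by linarith
  then have "L * (PR + 1 / real n) > 0" using Lge by (intro mult_pos_pos) auto
  then have D_gt: "D > 0" using Dpos by linarith
  have PRnD: "PR + 1 / real n \<le> D / L" using Dpos Lge by (simp add: pos_le_divide_eq mult.commute)
  have "L * PR \<le> L * (PR + 1 / real n)" using Lge nn by (intro mult_left_mono) auto
  then have LPR: "L * PR \<le> D" using Dpos by linarith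
  have PRD: "PR \<le> D / L" using LPR Lge by (simp add: pos_le_divide_eq mult.commute)
  have nD: "real n * D \<ge> L"
  proof -
    have "real n * D \<ge> real n * (L * (PR + 1 / real n))" using Dpos nn by (intro mult_left_mono) auto
    also have "real n * (L * (PR + 1 / real n)) = L * (real n * PR + 1)" using nn by (simp add: field_simps)
    also have "\<dots> \<ge> L" using Lge PR0 nn by simp
    finally show ?thesis .
  qed
  have msplit: "m = D + (\<Sum>i\<in>Rm q. q i - p i)" unfolding m_def D_def Dp1_def by (rule sum_R_split)
  have Rm_le: "(\<Sum>i\<in>Rm q. q i - p i) \<le> 0" unfolding Rm_def by (intro sum_nonpos) auto
  have Rm_ge: "(\<Sum>i\<in>Rm q. q i - p i) \<ge> - PR"
  proof -
    have "(\<Sum>i\<in>Rm q. q i - p i) \<ge> (\<Sum>i\<in>Rm q. - p i)"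
      using qj unfolding Rm_def by (intro sum_mono) auto
    also have "(\<Sum>i\<in>Rm q. - p i) \<ge> (\<Sum>i\<in>{A<..N}. - p i)"
    proof -
      have "(\<Sum>i\<in>{A<..N}. - p i) = (\<Sum>i\<in>Rp q. - p i) + (\<Sum>i\<in>Rm q. - p i)" by (rule sum_R_split)
      moreover have "(\<Sum>i\<in>Rp q. - p i) \<le> 0" using pj unfolding Rp_def by (intro sum_nonpos) auto
      ultimately show ?thesis by linarith
    qed
    also have "(\<Sum>i\<in>{A<..N}. - p i) = - PR" unfolding PR_def by (simp add: sum_negf)
    finally show ?thesis .
  qed
  have m_le: "m \<le> D" using msplit Rm_le by linarith
  have m_ge: "m \<ge> D / 2"
  proof -
    have "D / L \<le> D / 2" using D_gt Lge by (intro divide_left_mono) auto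
    then show ?thesis using msplit Rm_ge PRD by linarith
  qed
  have thr: "cbar eta * sqrt (PR / real n) \<le> D / 4"
  proof -
    have "sqrt (PR / real n) = sqrt (PR * (1 / real n))" by simp
    also have "\<dots> \<le> (PR + 1 / real n) / 2" using PR0 nn by (intro sqrt_amgm) auto
    also have "\<dots> \<le> (D / L) / 2" using PRnD by (intro divide_right_mono) auto
    finally have "cbar eta * sqrt (PR / real n) \<le> cbar eta * ((D / L) / 2)" using cb by (intro mult_left_mono) auto
    also have "cbar eta * ((D / L) / 2) = (2 * cbar eta) * D / (4 * L)" by (simp add: field_simps)
    also have "\<dots> \<le> L * D / (4 * L)" using L2 D_gt Lge by (intro divide_right_mono mult_right_mono) auto
    also have "\<dots> = D / 4" using Lge by simp
    finally show ?thesis .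
  qed
  have V: "Ex n N q (\<lambda>x. (T1 cI cA n N p t x - m)\<^sup>2) \<le> 2 * D / real n"
  proof -
    have "Ex n N q (\<lambda>x. (T1 cI cA n N p t x - m)\<^sup>2) = (\<Sum>i\<in>{A<..N}. q i * (1 - q i) / n)"
      unfolding m_def by (rule T1_var)
    also have "\<dots> \<le> (\<Sum>i\<in>{A<..N}. q i / n)"
      using qj nn by (intro sum_mono divide_right_mono) (auto simp: mult_left_le)
    also have "\<dots> = (PR + m) / real n"
      unfolding PR_def m_def by (simp add: sum_divide_distrib[symmetric] sum.distrib[symmetric])
    also have "\<dots> \<le> 2 * D / real n" using PRD m_le D_gt Lge nn
    proof -
      have "D / L \<le> D / 1" using D_gt Lge by (intro divide_left_mono) auto
      then have "PR \<le> D" using PRD by simp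
      then show ?thesis using m_le nn by (intro divide_right_mono) auto
    qed
    finally show ?thesis .
  qed
  have "Prob n N q (\<lambda>x. \<not> psi1 eta cI cA n N p t x) \<le> Prob n N q (\<lambda>x. \<bar>T1 cI cA n N p t x - m\<bar> \<ge> D / 4)"
  proof (intro Prob_mono[OF q])
    fix x assume "\<not> psi1 eta cI cA n N p t x"
    then have "\<bar>T1 cI cA n N p t x\<bar> \<le> cbar eta * sqrt (PR / real n)" by (simp add: psi1_iff not_less)
    then have "T1 cI cA n N p t x \<le> D / 4" using thr by linarith
    then show "\<bar>T1 cI cA n N p t x - m\<bar> \<ge> D / 4" using m_ge by linarith
  qed
  also have "\<dots> \<le> Ex n N q (\<lambda>x. (T1 cI cA n N p t x - m)\<^sup>2) / (D / 4)\<^sup>2"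
    using D_gt by (intro cheb[OF q]) auto
  also have "\<dots> \<le> (2 * D / real n) / (D / 4)\<^sup>2" using V D_gt by (intro divide_right_mono) auto
  also have "\<dots> = 32 / (real n * D)" using D_gt nn by (simp add: field_simps power2_eq_square)
  also have "\<dots> \<le> 32 / L" using nD Lge by (intro divide_left_mono) auto
  also have "\<dots> \<le> eta / 2"
  proof -
    have pos: "0 < L * (64 / eta)" using Lge eta by simp
    have "32 / L \<le> 32 / (64 / eta)" by (rule divide_left_mono[OF L1 _ pos]) simp
    then show ?thesis using eta by simp
  qed
  finally show ?thesis .
qed

end


lemma le_powr_small: "(x::real) \<ge> 0 \<Longrightarrow> x \<le> 1 \<Longrightarrow> 0 \<le> e \<Longrightarrow> e \<le> 1 \<Longrightarrow> x \<le> x powr e"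
proof -
  assume x: "x \<ge> 0" "x \<le> 1" and e: "0 \<le> e" "e \<le> 1"
  show ?thesis
  proof (cases "x = 0")
    case True then show ?thesis by simp
  next
    case False
    have "x powr 1 \<le> x powr e" using x e by (intro powr_mono') auto
    then show ?thesis using False x by simp
  qed
qed

lemma powr_subadd:
  fixes a b e :: real
  assumes a: "a \<ge> 0" and b: "b \<ge> 0" and e: "0 \<le> e" "e \<le> 1"
  shows "(a + b) powr e \<le> a powr e + b powr e"
proof (cases "a + b = 0")
  case True then show ?thesis by simp
next
  case False
  define s where "s = a + b"
  have sp: "s > 0" unfolding s_def using a b False by simp
  have "1 = a / s + b / s" unfolding s_def using sp s_def by (simp add: add_divide_distrib[symmetric])
  also have "\<dots> \<le> (a / s) powr e + (b / s) powr e"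
    using a b sp e unfolding s_def by (intro add_mono le_powr_small) (auto simp: divide_simps)
  also have "\<dots> = (a powr e + b powr e) / s powr e"
    by (simp add: powr_divide add_divide_distrib)
  finally have "s powr e \<le> a powr e + b powr e" using sp by (simp add: le_divide_eq)
  then show ?thesis unfolding s_def .
qed

context setting begin

lemma Rm_sig: "(\<Sum>i\<in>Rm q. \<bar>q i - p i\<bar> powr t) \<le> 2 * Rt powr t" if q: "in_cube N q"
proof -
  have "(\<Sum>i\<in>Rm q. \<bar>q i - p i\<bar> powr t) \<le> (\<Sum>i\<in>Rm q. p i powr t)"
  proof (intro sum_mono powr_mono2)
    fix i assume i: "i \<in> Rm q"
    then have iR: "i \<in> {A<..N}" and le: "q i \<le> p i" unfolding Rm_def by auto
    have "q i \<ge> 0" using q iR unfolding in_cube_def by auto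
    then show "\<bar>q i - p i\<bar> \<le> p i" using le by simp
  qed (use t in auto)
  also have "\<dots> \<le> (\<Sum>i\<in>{A<..N}. p i powr t)"
    unfolding Rm_def by (intro sum_mono2) auto
  also have "\<dots> \<le> 2 * Rt powr t" by (rule R_p_t)
  finally show ?thesis .
qed

lemma sigR_split: "(\<Sum>i\<in>{A<..N}. \<bar>q i - p i\<bar> powr t) = (\<Sum>i\<in>Rp q. (q i - p i) powr t) + (\<Sum>i\<in>Rm q. \<bar>q i - p i\<bar> powr t)"
proof -
  have "(\<Sum>i\<in>{A<..N}. \<bar>q i - p i\<bar> powr t) = (\<Sum>i\<in>Rp q. \<bar>q i - p i\<bar> powr t) + (\<Sum>i\<in>Rm q. \<bar>q i - p i\<bar> powr t)"
    by (rule sum_R_split)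
  moreover have "(\<Sum>i\<in>Rp q. \<bar>q i - p i\<bar> powr t) = (\<Sum>i\<in>Rp q. (q i - p i) powr t)"
    unfolding Rp_def by (intro sum.cong refl) auto
  ultimately show ?thesis by simp
qed

lemma Rp_interp:
  assumes q: "in_cube N q"
  shows "(\<Sum>i\<in>Rp q. (q i - p i) powr t) \<le> Dp1 q powr (2-t) * (\<Sum>i\<in>{A<..N}. (q i)\<^sup>2) powr (t-1)"
proof -
  have "(\<Sum>i\<in>Rp q. (q i - p i) powr t) = (\<Sum>i\<in>Rp q. (q i - p i) powr (2-t) * ((q i - p i)\<^sup>2) powr (t-1))"
  proof (intro sum.cong refl)
    fix i assume i: "i \<in> Rp q"
    then have d: "q i - p i > 0" unfolding Rp_def by auto
    have "((q i - p i)\<^sup>2) powr (t-1) = (q i - p i) powr (real 2 * (t-1))" by (rule pow_powr[OF d])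
    then show "(q i - p i) powr t = (q i - p i) powr (2-t) * ((q i - p i)\<^sup>2) powr (t-1)"
      using d by (simp add: powr_add[symmetric])
  qed
  also have "\<dots> \<le> (\<Sum>i\<in>Rp q. q i - p i) powr (2-t) * (\<Sum>i\<in>Rp q. (q i - p i)\<^sup>2) powr (t-1)"
  proof (rule holder_sum)
    show "finite (Rp q)" by (rule R_part)
    show "0 \<le> 2 - t" "0 \<le> t - 1" "2 - t + (t - 1) = 1" using t by auto
    fix i assume "i \<in> Rp q" then show "0 \<le> q i - p i" "0 \<le> (q i - p i)\<^sup>2" unfolding Rp_def by auto
  qed
  also have "\<dots> \<le> Dp1 q powr (2-t) * (\<Sum>i\<in>{A<..N}. (q i)\<^sup>2) powr (t-1)"
    unfolding Dp1_def
  proof (intro mult_left_mono powr_mono2)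
    show "0 \<le> t - 1" using t by simp
    show "0 \<le> (\<Sum>i\<in>Rp q. (q i - p i)\<^sup>2)" by (intro sum_nonneg) auto
    have "(\<Sum>i\<in>Rp q. (q i - p i)\<^sup>2) \<le> (\<Sum>i\<in>Rp q. (q i)\<^sup>2)"
    proof (intro sum_mono power_mono)
      fix i assume i: "i \<in> Rp q"
      then have "p i \<ge> 0" "q i > p i" unfolding Rp_def using p_nonneg by auto
      then show "q i - p i \<le> q i" "0 \<le> q i - p i" by auto
    qed
    also have "\<dots> \<le> (\<Sum>i\<in>{A<..N}. (q i)\<^sup>2)" unfolding Rp_def by (intro sum_mono2) auto
    finally show "(\<Sum>i\<in>Rp q. (q i - p i)\<^sup>2) \<le> (\<Sum>i\<in>{A<..N}. (q i)\<^sup>2)" .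
  qed simp_all
  finally show ?thesis .
qed

end


context setting begin

lemma inv_n_powr: "(1 / real n) powr (2 - t) * real n powr (2 - 2*t) = (1 / real n) powr t"
proof -
  have nn: "real n > 0" using n_pos by simp
  have "(1 / real n) powr (2 - t) = 1 / real n powr (2 - t)" by (simp add: powr_divide)
  moreover have "(1 / real n) powr t = 1 / real n powr t" by (simp add: powr_divide)
  moreover have "real n powr (2 - 2*t) = real n powr (2 - t) / real n powr t"
    using nn by (simp add: powr_diff[symmetric])
  ultimately show ?thesis using nn by simp
qed

lemma tail_interp:
  assumes q: "in_cube N q" and K0: "K0 \<ge> 1" and L: "L \<ge> 1"
    and C: "C \<ge> 32 * L * (2/cI + 2) * K0"
    and SigR: "(\<Sum>i\<in>{A<..N}. \<bar>q i - p i\<bar> powr t) \<ge> (C * Rt) powr t / 2"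
    and Q2: "(\<Sum>i\<in>{A<..N}. (q i)\<^sup>2) < 4 * K0 / (real n)\<^sup>2"
  shows "Dp1 q \<ge> L * (PR + 1 / real n)"
proof -
  define G where "G = 2/cI + 2"
  define Q where "Q = (\<Sum>i\<in>{A<..N}. (q i)\<^sup>2)"
  define D where "D = Dp1 q"
  define SP where "SP = (\<Sum>i\<in>Rp q. (q i - p i) powr t)"
  have nn: "real n > 0" using n_pos by simp
  have G4: "G \<ge> 4" unfolding G_def using cI by (simp add: divide_simps)
  have C128: "C \<ge> 128 * K0"
  proof -
    have "1 * 4 \<le> L * G" using L G4 by (intro mult_mono) auto
    then have "(32 * K0) * 4 \<le> (32 * K0) * (L * G)" using K0 by (intro mult_left_mono) auto
    then show ?thesis using C unfolding G_def[symmetric] by (simp add: algebra_simps)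
  qed
  have C1: "C \<ge> 128" using C128 K0 by simp
  have Rtp: "Rt > 0" by (rule Rt_pos)
  have Ct: "C powr t \<ge> C"
  proof -
    have "C powr 1 \<le> C powr t" using t C1 by (intro powr_mono) auto
    then show ?thesis using C1 by simp
  qed
  have CRt: "(C * Rt) powr t = C powr t * Rt powr t" by (rule powr_mult) 
  have D0: "D \<ge> 0" unfolding D_def Dp1_def Rp_def by (intro sum_nonneg) auto
  have Q0: "Q \<ge> 0" unfolding Q_def by (intro sum_nonneg) auto
  have SPlow: "SP \<ge> C powr t * Rt powr t / 4"
  proof -
    have "SP = (\<Sum>i\<in>{A<..N}. \<bar>q i - p i\<bar> powr t) - (\<Sum>i\<in>Rm q. \<bar>q i - p i\<bar> powr t)"
      unfolding SP_def using sigR_split[of q] by simp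
    moreover have "(\<Sum>i\<in>Rm q. \<bar>q i - p i\<bar> powr t) \<le> 2 * Rt powr t" by (rule Rm_sig[OF q])
    moreover have "C powr t * Rt powr t / 4 \<ge> 2 * Rt powr t"
    proof -
      have "C powr t \<ge> 8" using Ct C1 by simp
      then have "C powr t * Rt powr t \<ge> 8 * Rt powr t" by (intro mult_right_mono) auto
      then show ?thesis by simp
    qed
    ultimately show ?thesis using SigR unfolding CRt by linarith
  qed
  have SPup: "SP \<le> D powr (2-t) * (4 * K0 / (real n)\<^sup>2) powr (t-1)"
  proof -
    have "SP \<le> D powr (2-t) * Q powr (t-1)" unfolding SP_def D_def Q_def by (rule Rp_interp[OF q])
    also have "\<dots> \<le> D powr (2-t) * (4 * K0 / (real n)\<^sup>2) powr (t-1)"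
      using Q2 Q0 t unfolding Q_def[symmetric] by (intro mult_left_mono powr_mono2) auto
    finally show ?thesis .
  qed
  show ?thesis
  proof (cases "t = 2")
    case True
    have "D powr (2-t) \<le> 1" using True by (simp add: powr_def)
    then have "D powr (2-t) * (4 * K0 / (real n)\<^sup>2) powr (t-1) \<le> 1 * (4 * K0 / (real n)\<^sup>2) powr (t-1)"
      by (rule mult_right_mono) simp
    then have "SP \<le> 1 * (4 * K0 / (real n)\<^sup>2) powr (t-1)"
      using SPup by linarith
    also have "\<dots> = 4 * K0 / (real n)\<^sup>2" using True K0 by simp
    finally have up: "SP \<le> 4 * K0 / (real n)\<^sup>2" .
    have "C powr t * Rt powr t / 4 = C\<^sup>2 * Rt\<^sup>2 / 4" using True C1 Rtp by (simp add: powr_numeral)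
    also have "C\<^sup>2 * Rt\<^sup>2 / 4 \<ge> C\<^sup>2 * (1 / real n)\<^sup>2 / 4"
      using Rt_ge(3) nn by (intro divide_right_mono mult_left_mono power_mono) auto
    finally have "SP \<ge> C\<^sup>2 * (1 / real n)\<^sup>2 / 4" using SPlow by linarith
    then have "C\<^sup>2 * (1 / real n)\<^sup>2 / 4 \<le> 4 * K0 / (real n)\<^sup>2" using up by linarith
    then have "C\<^sup>2 \<le> 16 * K0" using nn by (simp add: field_simps power2_eq_square)
    moreover have "C\<^sup>2 \<ge> 128 * K0 * 128" using C128 C1 K0 unfolding power2_eq_square by (intro mult_mono) auto
    ultimately show ?thesis using K0 by simp
  next
    case False
    then have t2: "t < 2" using t by simp
    define e where "e = 2 - t"
    have e: "0 < e" "e \<le> 1" unfolding e_def using t t2 by auto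
    define W where "W = L * (PR + 1 / real n)"
    have PR0: "PR \<ge> 0" by (rule PR_nonneg)
    have W0: "W \<ge> 0" unfolding W_def using L PR0 nn by simp
    define Y where "Y = (4 * K0 / (real n)\<^sup>2) powr (t-1)"
    have Yp: "Y > 0" unfolding Y_def using K0 nn by simp
    have Yeq: "Y = (4 * K0) powr (t-1) * real n powr (2 - 2*t)"
    proof -
      have "Y = (4 * K0) powr (t-1) / ((real n)\<^sup>2) powr (t-1)" unfolding Y_def by (simp add: powr_divide)
      also have "((real n)\<^sup>2) powr (t-1) = real n powr (real 2 * (t-1))" by (rule pow_powr[OF nn])
      also have "real n powr (2 - 2*t) = 1 / real n powr (real 2 * (t-1))"
        using powr_minus_divide[of "real n" "real 2 * (t-1)"] by (simp add: algebra_simps)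
      ultimately show ?thesis by simp
    qed
    have K4: "(4 * K0) powr (t-1) \<le> 4 * K0"
    proof -
      have "(4 * K0) powr (t-1) \<le> (4 * K0) powr 1" using K0 t by (intro powr_mono) auto
      then show ?thesis using K0 by simp
    qed
    have WG: "W \<le> L * G * (T + 1 / real n)"
    proof -
      have "PR \<le> (2/cI + 1) * (T + 1 / real n)" unfolding PR_def by (rule P_R_bound)
      moreover have "1 / real n \<le> T + 1 / real n" using T_nonneg by simp
      ultimately have "PR + 1 / real n \<le> G * (T + 1 / real n)" unfolding G_def by (simp add: algebra_simps)
      then show ?thesis unfolding W_def using L by (simp add: mult.assoc mult_left_mono)
    qed
    have "1 * 1 \<le> L * G" using L G4 by (intro mult_mono) auto
    then have LG1: "L * G \<ge> 1" by simp
    have "W powr e \<le> (L * G * (T + 1 / real n)) powr e" using WG W0 e by (intro powr_mono2) auto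
    also have "\<dots> = (L * G) powr e * (T + 1 / real n) powr e" by (rule powr_mult)
    also have "\<dots> \<le> (L * G) * (T powr e + (1 / real n) powr e)"
    proof (intro mult_mono)
      show "(L * G) powr e \<le> L * G"
      proof -
        have "(L * G) powr e \<le> (L * G) powr 1" using LG1 e by (intro powr_mono) auto
        then show ?thesis using LG1 by simp
      qed
      show "(T + 1 / real n) powr e \<le> T powr e + (1 / real n) powr e"
        using T_nonneg nn e by (intro powr_subadd) auto
    qed (use LG1 in auto)
    finally have Wp: "W powr e \<le> L * G * (T powr e + (1 / real n) powr e)" .
    have "W powr e * Y \<le> L * G * (T powr e + (1 / real n) powr e) * Y"
      using Wp Yp by (intro mult_right_mono) auto
    also have "\<dots> = L * G * (4 * K0) powr (t-1) * (T powr e * real n powr (2 - 2*t) + (1 / real n) powr e * real n powr (2 - 2*t))"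
      unfolding Yeq by (simp add: algebra_simps)
    also have "\<dots> \<le> L * G * (4 * K0) * (Rt powr t + Rt powr t)"
    proof (intro mult_mono add_mono)
      show "(4 * K0) powr (t-1) \<le> 4 * K0" by (rule K4)
      have "tau powr t \<le> Rt powr t" using Rt_ge(2) tau_nonneg t by (intro powr_mono2) auto
      then show "T powr e * real n powr (2 - 2*t) \<le> Rt powr t"
        unfolding e_def using tau_powr_t by linarith
      show "(1 / real n) powr e * real n powr (2 - 2*t) \<le> Rt powr t"
        unfolding e_def inv_n_powr using Rt_ge(3) nn t by (intro powr_mono2) auto
    qed (use LG1 K0 L G4 in auto)
    also have "\<dots> = 8 * L * G * K0 * Rt powr t" by simp
    also have "\<dots> \<le> C powr t * Rt powr t / 4"
    proof -
      have "8 * L * G * K0 \<le> C / 4" using C unfolding G_def by simp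
      also have "\<dots> \<le> C powr t / 4" using Ct by simp
      finally have "8 * L * G * K0 \<le> C powr t / 4" .
      then have "8 * L * G * K0 * Rt powr t \<le> C powr t / 4 * Rt powr t" by (rule mult_right_mono) simp
      then show ?thesis by simp
    qed
    also have "\<dots> \<le> SP" by (rule SPlow)
    also have "\<dots> \<le> D powr e * Y" unfolding e_def Y_def by (rule SPup)
    finally have "W powr e * Y \<le> D powr e * Y" .
    then have WD: "W powr e \<le> D powr e" using Yp by simp
    show ?thesis
    proof (rule ccontr)
      assume "\<not> ?thesis"
      then have "D < W" unfolding W_def D_def by simp
      then have "D powr e < W powr e" using D0 e by (intro powr_less_mono2) auto
      then show False using WD by simp
    qed
  qed
qed

end


context setting begin

lemma typeII:
  assumes eta: "0 < eta" "eta < 1" and q: "in_cube N q"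
    and CC: "C = 8 + 8 * cbar eta + 384 / (eta * cA\<^sup>2) + 32 * (64/eta + 2 * cbar eta) * (2/cI + 2) * (36 / eta\<^sup>2)"
    and dist: "lnorm_on t (\<lambda>j. p j - q j) {1..N} \<ge> C * Rt"
  shows "Prob n N q (\<lambda>x. \<not> test eta cI cA n N p t x) \<le> eta / 2"
proof -
  define K0 where "K0 = 36 / eta\<^sup>2"
  define L where "L = 64/eta + 2 * cbar eta"
  have cb: "cbar eta > 0" using cbar_pos eta by simp
  have K0: "K0 \<ge> 1"
  proof -
    have "eta\<^sup>2 \<le> 1" using eta by (simp add: power_le_one)
    then show ?thesis unfolding K0_def using eta by (simp add: divide_simps)
  qed
  have L64: "L \<ge> 64 / eta" "L \<ge> 2 * cbar eta" unfolding L_def using cb eta by auto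
  have L1: "L \<ge> 1"
  proof -
    have "64 / eta \<ge> 64" using eta by (simp add: divide_simps)
    then show ?thesis using L64 by linarith
  qed
  have cA2: "cA\<^sup>2 > 0" using cA by simp
  have t1: "384 / (eta * cA\<^sup>2) \<ge> 0" "8 * cbar eta \<ge> 0" using eta cA2 cb by auto
  have t2: "32 * L * (2/cI + 2) * K0 \<ge> 0" using L1 K0 cI by simp
  have CL: "C \<ge> 32 * L * (2/cI + 2) * K0" using CC t1 unfolding L_def K0_def by linarith
  have C8: "C \<ge> 8" using CC t1 t2 unfolding L_def K0_def by linarith
  have C2: "C \<ge> 2" using C8 by simp
  have Cc: "C\<^sup>2 \<ge> 8 * cbar eta"
  proof -
    have "C \<ge> 8 * cbar eta" using CC t1 t2 unfolding L_def K0_def by linarith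
    moreover have "C \<le> C\<^sup>2" using C8 by (simp add: power2_eq_square)
    ultimately show ?thesis by linarith
  qed
  have Ce: "C * (eta * cA\<^sup>2) \<ge> 384"
  proof -
    have "C \<ge> 384 / (eta * cA\<^sup>2)" using CC t1 t2 unfolding L_def K0_def by linarith
    then show ?thesis using eta cA2 by (simp add: divide_simps mult.commute)
  qed
  have Cp: "C > 0" using C8 by simp
  have nn: "real n > 0" using n_pos by simp
  have tp: "t > 0" using t by simp
  define Sig where "Sig = (\<Sum>j\<in>{1..N}. \<bar>q j - p j\<bar> powr t)"
  have Sig0: "Sig \<ge> 0" unfolding Sig_def by (intro sum_nonneg) auto
  have SigC: "Sig \<ge> (C * Rt) powr t"
  proof -
    have "lnorm_on t (\<lambda>j. p j - q j) {1..N} = Sig powr (1/t)"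
      unfolding lnorm_on_def Sig_def by (simp add: abs_minus_commute)
    then have "C * Rt \<le> Sig powr (1/t)" using dist by simp
    then have "(C * Rt) powr t \<le> (Sig powr (1/t)) powr t" using Cp Rt_pos tp by (intro powr_mono2) auto
    also have "(Sig powr (1/t)) powr t = Sig" using tp Sig0 by (simp add: powr_powr)
    finally show ?thesis .
  qed
  have split: "Sig = (\<Sum>j\<in>{1..A}. \<bar>q j - p j\<bar> powr t) + (\<Sum>j\<in>{A<..N}. \<bar>q j - p j\<bar> powr t)"
  proof -
    have "{1..N} = {1..A} \<union> {A<..N}" using A_le_N by auto
    then show ?thesis unfolding Sig_def by (simp only:) (rule sum.union_disjoint, auto)
  qed
  show ?thesis
  proof (cases "(\<Sum>j\<in>{1..A}. \<bar>q j - p j\<bar> powr t) \<ge> Sig / 2")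
    case True
    then have SB: "(\<Sum>j\<in>{1..A}. \<bar>q j - p j\<bar> powr t) \<ge> (C * Rt) powr t / 2" using SigC by linarith
    have "(C * Rt) powr t > 0" using Cp Rt_pos by simp
    then have A1: "A \<ge> 1" using SB by (cases A) auto
    have Elb: "Eb q \<ge> C\<^sup>2 * sqrt S / (4 * real n)" by (rule bulk_E_lb[OF Cp A1 SB])
    have "Prob n N q (\<lambda>x. \<not> test eta cI cA n N p t x) \<le> Prob n N q (\<lambda>x. \<not> psi_bulk eta cI cA n N p t x)"
      using q by (intro Prob_mono) (auto simp: test_def)
    also have "\<dots> \<le> eta / 2" by (rule typeII_bulk_core[OF eta(1) q A1 C2 Cc Ce Elb])
    finally show ?thesis .
  next
    case False
    then have SR: "(\<Sum>j\<in>{A<..N}. \<bar>q j - p j\<bar> powr t) \<ge> (C * Rt) powr t / 2" using SigC split by linarith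
    show ?thesis
    proof (cases "mu q \<ge> 36 / eta\<^sup>2")
      case True
      have "Prob n N q (\<lambda>x. \<not> test eta cI cA n N p t x) \<le> Prob n N q (\<lambda>x. \<not> psi2 cI cA n N p t x)"
        using q by (intro Prob_mono) (auto simp: test_def)
      also have "\<dots> \<le> eta / 2" by (rule collide[OF eta q True])
      finally show ?thesis .
    next
      case False
      have kp: "real k > 0" using nk by simp
      have "(\<Sum>j\<in>{A<..N}. (q j)\<^sup>2) < 4 * K0 / (real n)\<^sup>2"
      proof -
        have "(real k)\<^sup>2 * (\<Sum>j\<in>{A<..N}. (q j)\<^sup>2) < K0" using False unfolding mu_def K0_def by (simp add: sum_distrib_left)
        then show ?thesis using kp nk by (simp add: field_simps power2_eq_square)
      qed
      then have Dp: "Dp1 q \<ge> L * (PR + 1 / real n)"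
        by (intro tail_interp[OF q K0 L1 CL SR])
      have "Prob n N q (\<lambda>x. \<not> test eta cI cA n N p t x) \<le> Prob n N q (\<lambda>x. \<not> psi1 eta cI cA n N p t x)"
        using q by (intro Prob_mono) (auto simp: test_def)
      also have "\<dots> \<le> eta / 2" by (rule psi1_detect[OF eta q L64 Dp])
      finally show ?thesis .
    qed
  qed
qed

end

theorem theorem3:
  fixes eta :: real
  assumes "0 < eta" and "eta < 1"
  shows "\<exists>c0>0. \<forall>cI cA. 0 < cI \<and> cI \<le> c0 \<and> 0 < cA \<and> cA \<le> c0 \<longrightarrow>
    (\<forall>t::real. 1 \<le> t \<and> t \<le> 2 \<longrightarrow>
      (\<exists>C'>0. \<forall>(N::nat) (n::nat) (p::nat \<Rightarrow> real).
         2 \<le> N \<and> 2 \<le> n \<and> even n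
         \<and> (\<forall>i j. 1 \<le> i \<and> i \<le> j \<and> j \<le> N \<longrightarrow> p j \<le> p i)
         \<and> (\<forall>j\<in>{1..N}. 0 \<le> p j \<and> p j \<le> 1/2)
         \<longrightarrow>
           Prob n N p (test eta cI cA n N p t) \<le> eta / 2
         \<and> (\<forall>q. in_cube N q \<and> lnorm_on t (\<lambda>j. p j - q j) {1..N} \<ge> C' * rate cI n N p t
                \<longrightarrow> Prob n N q (\<lambda>x. \<not> test eta cI cA n N p t x) \<le> eta / 2)
         \<and> rho_star n N p t eta \<le> C' * rate cI n N p t))"
proof -
  have eta: "0 < eta" "eta < 1" using assms by auto
  show ?thesis
  proof (rule exI[where x="eta/8"], intro conjI allI impI)
    show "eta / 8 > 0" using eta by simp
    fix cI cA :: real assume c: "0 < cI \<and> cI \<le> eta / 8 \<and> 0 < cA \<and> cA \<le> eta / 8"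
    fix t :: real assume tt: "1 \<le> t \<and> t \<le> 2"
    define C where "C = 8 + 8 * cbar eta + 384 / (eta * cA\<^sup>2) + 32 * (64/eta + 2 * cbar eta) * (2/cI + 2) * (36 / eta\<^sup>2)"
    have Cp: "C > 0"
    proof -
      have "cbar eta > 0" using cbar_pos eta by simp
      moreover have "384 / (eta * cA\<^sup>2) \<ge> 0" using eta c by simp
      moreover have "32 * (64/eta + 2 * cbar eta) * (2/cI + 2) * (36 / eta\<^sup>2) \<ge> 0"
        using eta c \<open>cbar eta > 0\<close> by simp
      ultimately show ?thesis unfolding C_def by linarith
    qed
    show "\<exists>C'>0. \<forall>(N::nat) (n::nat) (p::nat \<Rightarrow> real).
         2 \<le> N \<and> 2 \<le> n \<and> even n
         \<and> (\<forall>i j. 1 \<le> i \<and> i \<le> j \<and> j \<le> N \<longrightarrow> p j \<le> p i)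
         \<and> (\<forall>j\<in>{1..N}. 0 \<le> p j \<and> p j \<le> 1/2)
         \<longrightarrow>
           Prob n N p (test eta cI cA n N p t) \<le> eta / 2
         \<and> (\<forall>q. in_cube N q \<and> lnorm_on t (\<lambda>j. p j - q j) {1..N} \<ge> C' * rate cI n N p t
                \<longrightarrow> Prob n N q (\<lambda>x. \<not> test eta cI cA n N p t x) \<le> eta / 2)
         \<and> rho_star n N p t eta \<le> C' * rate cI n N p t"
    proof (rule exI[where x=C], intro conjI allI impI)
      show "C > 0" by (rule Cp)
      fix N n :: nat and p :: "nat \<Rightarrow> real"
      assume H: "2 \<le> N \<and> 2 \<le> n \<and> even n
         \<and> (\<forall>i j. 1 \<le> i \<and> i \<le> j \<and> j \<le> N \<longrightarrow> p j \<le> p i)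
         \<and> (\<forall>j\<in>{1..N}. 0 \<le> p j \<and> p j \<le> 1/2)"
      obtain k where k: "n = 2 * k" using H by (auto elim: evenE)
      have k1: "k \<ge> 1" using H k by simp
      interpret S: setting N n k p t cI cA
      proof
        show "n = 2 * k" by (rule k)
        show "1 \<le> k" by (rule k1)
        show "\<And>i j. 1 \<le> i \<Longrightarrow> i \<le> j \<Longrightarrow> j \<le> N \<Longrightarrow> p j \<le> p i" using H by blast
        show "\<And>j. j \<in> {1..N} \<Longrightarrow> 0 \<le> p j \<and> p j \<le> 1/2" using H by blast
        show "1 \<le> t" "t \<le> 2" using tt by auto
        show "0 < cI" "cI \<le> 1" "0 < cA" "cA \<le> 1" using c eta by auto
      qed
      have typeI: "Prob n N p (test eta cI cA n N p t) \<le> eta / 2"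
        using S.typeI[of eta] c eta by simp
      have typeII: "Prob n N q (\<lambda>x. \<not> test eta cI cA n N p t x) \<le> eta / 2"
        if "in_cube N q \<and> lnorm_on t (\<lambda>j. p j - q j) {1..N} \<ge> C * rate cI n N p t" for q
        using S.typeII[OF eta, of q C] that C_def S.rate_eq by simp
      show "Prob n N p (test eta cI cA n N p t) \<le> eta / 2" by (rule typeI)
      show "\<And>q. in_cube N q \<and> lnorm_on t (\<lambda>j. p j - q j) {1..N} \<ge> C * rate cI n N p t
                \<Longrightarrow> Prob n N q (\<lambda>x. \<not> test eta cI cA n N p t x) \<le> eta / 2"
        by (rule typeII)
      show "rho_star n N p t eta \<le> C * rate cI n N p t"
        unfolding rho_star_def
      proof (rule cInf_lower)
        have rp: "rate cI n N p t > 0" using S.rate_eq S.Rt_pos by simp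
        show "C * rate cI n N p t \<in> {\<rho>. \<rho> > 0 \<and>
           (\<exists>\<psi>. \<forall>q. in_cube N q \<and> lnorm_on t (\<lambda>j. p j - q j) {1..N} \<ge> \<rho> \<longrightarrow>
              Prob n N p \<psi> + Prob n N q (\<lambda>x. \<not> \<psi> x) \<le> eta)}"
        proof (intro CollectI conjI exI allI impI)
          show "C * rate cI n N p t > 0" using Cp rp by simp
          fix q assume "in_cube N q \<and> C * rate cI n N p t \<le> lnorm_on t (\<lambda>j. p j - q j) {1..N}"
          then have "Prob n N q (\<lambda>x. \<not> test eta cI cA n N p t x) \<le> eta / 2" by (intro typeII) simp
          then show "Prob n N p (test eta cI cA n N p t) + Prob n N q (\<lambda>x. \<not> test eta cI cA n N p t x) \<le> eta"
            using typeI by linarith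
        qed
        show "bdd_below {\<rho>. \<rho> > 0 \<and>
           (\<exists>\<psi>. \<forall>q. in_cube N q \<and> lnorm_on t (\<lambda>j. p j - q j) {1..N} \<ge> \<rho> \<longrightarrow>
              Prob n N p \<psi> + Prob n N q (\<lambda>x. \<not> \<psi> x) \<le> eta)}"
          by (rule bdd_belowI[where m=0]) auto
      qed
    qed
  qed
qed


end
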